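(* Let $G$ be a progressive graph and $\prec$ a planar order on $G$. Then there is an upward BP-embedding $\phi$ of $G$ such that $\prec=\prec_\phi$.
   Context: A progressive graph is a finite directed acyclic graph (parallel edges allowed) in which every source and every sink has degree one. Degree-one vertices are boundary vertices, the others internal vertices. An input edge is an edge whose initial vertex is a boundary vertex; an output edge is one whose terminal vertex is a boundary vertex. For edges write $e\to e'$ if $e\neq e'$ and there is a directed path whose first edge is $e$ and last edge is $e'$. For a vertex $v$, $I(v)$, $O(v)$ are its sets of incoming and outgoing edges. A planar order on $G$ is a linear order $\prec$ on $E(G)$ such that (P1) $e_1\to e_2$ implies $e_1\prec e_2$; (P2) if $e_1\prec e_2\prec e_3$ and $e_1\to e_3$, then $e_1\to e_2$ or $e_2\to e_3$. Composition: let $(G_1,\prec_1)$, $(G_2,\prec_2)$ be progressive graphs with linear orders on their edges, where $G_1$ has output edges $o_1\prec_1\cdots\prec_1 o_n$ and $G_2$ has input edges $i_1\prec_2\cdots\prec_2 i_n$. The graph $G_2\circ G_1$ is obtained from $G_1\sqcup G_2$ by deleting the sinks of $G_1$, the sources of $G_2$ and the edges $o_k,i_k$, and adding for each $k$ a new edge $\overline{e_k}$ from the initial vertex of $o_k$ to the terminal vertex of $i_k$. Let $Q_1=\{e: e\prec_1 o_1\}$, $Q_k=\{e: o_{k-1}\prec_1 e\prec_1 o_k\}$ ($2\le k\le n$), $P_k=\{e: i_k\prec_2 e\prec_2 i_{k+1}\}$ ($1\le k\le n-1$), $P_n=\{e: i_n\prec_2 e\}$. Then $\prec_2\circ\prec_1$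 is the linear order on $E(G_2\circ G_1)$ listing $Q_1,\{\overline{e_1}\},P_1,\dots,Q_n,\{\overline{e_n}\},P_n$ consecutively, each $Q_k$ ordered by $\prec_1$ and each $P_k$ by $\prec_2$. A BP-embedding of $G$ is an embedding of $G$ into a closed rectangle $R=[a,b]\times[c,d]\subset\mathbb{R}^2$ (vertices to distinct points, edges to simple arcs meeting only at common endpoints) such that all sources lie on the top side, all sinks on the bottom side, and everything else lies in the interior of $R$. It is upward if the $y$-coordinate strictly decreases along every edge from its initial to its terminal vertex. $G$ is elementary if each connected component has at most one internal vertex. Canonical order for elementary $G$ with upward BP-embedding $\phi$: each component is a single edge or a star with one internal vertex $v$; $\prec_\phi$ lists components from left to right, and within a star lists $I(v)$ from left to right followed by $O(v)$ from left to right. For arbitrary upward $\phi$: choose heights $d=y_0>\cdots>y_n=c$ with no vertex on the lines $y=y_j$ ($0<j<n$) and at most one internal vertex per strip; cutting edges at these lines exhibits $\phi$ as a vertical stack of elementary upward BP-embeddings $\phi_1$ (top),\dots,$\phi_n$ (bottom) of graphs $G_1,\dots,G_n$ with $G=G_n\circ\cdots\circ G_1$, and $\prec_\phi:=\prec_{\phi_n}\circ\cdots\circ\prec_{\phi_1}$. *)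

theory Defs
  imports "HOL-Analysis.Analysis"
begin

text \<open>A graph is given by a vertex set V, an edge set E and maps src, tgt
  (initial and terminal vertex); parallel edges are allowed.\<close>

definition in_edges :: "'e set \<Rightarrow> ('e \<Rightarrow> 'v) \<Rightarrow> 'v \<Rightarrow> 'e set" where
  "in_edges E tgt v = {e \<in> E. tgt e = v}"

definition out_edges :: "'e set \<Rightarrow> ('e \<Rightarrow> 'v) \<Rightarrow> 'v \<Rightarrow> 'e set" where
  "out_edges E src v = {e \<in> E. src e = v}"

definition degree :: "'e set \<Rightarrow> ('e \<Rightarrow> 'v) \<Rightarrow> ('e \<Rightarrow> 'v) \<Rightarrow> 'v \<Rightarrow> nat" where
  "degree E src tgt v = card (in_edges E tgt v) + card (out_edges E src v)"

definition is_source :: "'v set \<Rightarrow> 'e set \<Rightarrow> ('e \<Rightarrow> 'v) \<Rightarrow> 'v \<Rightarrow> bool" where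
  "is_source V E tgt v \<longleftrightarrow> v \<in> V \<and> in_edges E tgt v = {}"

definition is_sink :: "'v set \<Rightarrow> 'e set \<Rightarrow> ('e \<Rightarrow> 'v) \<Rightarrow> 'v \<Rightarrow> bool" where
  "is_sink V E src v \<longleftrightarrow> v \<in> V \<and> out_edges E src v = {}"

definition progressive_graph :: "'v set \<Rightarrow> 'e set \<Rightarrow> ('e \<Rightarrow> 'v) \<Rightarrow> ('e \<Rightarrow> 'v) \<Rightarrow> bool" where
  "progressive_graph V E src tgt \<longleftrightarrow>
     finite V \<and> finite E \<and>
     (\<forall>e\<in>E. src e \<in> V \<and> tgt e \<in> V) \<and>
     acyclic {(src e, tgt e) | e. e \<in> E} \<and>
     (\<forall>v. is_source V E tgt v \<longrightarrow> degree E src tgt v = 1) \<and>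
     (\<forall>v. is_sink V E src v \<longrightarrow> degree E src tgt v = 1)"

definition internal_vertex :: "'v set \<Rightarrow> 'e set \<Rightarrow> ('e \<Rightarrow> 'v) \<Rightarrow> ('e \<Rightarrow> 'v) \<Rightarrow> 'v \<Rightarrow> bool" where
  "internal_vertex V E src tgt v \<longleftrightarrow> v \<in> V \<and> degree E src tgt v \<noteq> 1"

definition edge_reach :: "'e set \<Rightarrow> ('e \<Rightarrow> 'v) \<Rightarrow> ('e \<Rightarrow> 'v) \<Rightarrow> 'e \<Rightarrow> 'e \<Rightarrow> bool" where
  "edge_reach E src tgt e e' \<longleftrightarrow>
     e \<noteq> e' \<and> (e, e') \<in> {(a, b). a \<in> E \<and> b \<in> E \<and> tgt a = src b}\<^sup>+"

definition strict_linear_on :: "'e set \<Rightarrow> ('e \<times> 'e) set \<Rightarrow> bool" where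
  "strict_linear_on E r \<longleftrightarrow> r \<subseteq> E \<times> E \<and> trans r \<and> (\<forall>e\<in>E. (e, e) \<notin> r) \<and>
     (\<forall>e\<in>E. \<forall>e'\<in>E. e \<noteq> e' \<longrightarrow> (e, e') \<in> r \<or> (e', e) \<in> r)"

definition planar_order :: "'e set \<Rightarrow> ('e \<Rightarrow> 'v) \<Rightarrow> ('e \<Rightarrow> 'v) \<Rightarrow> ('e \<times> 'e) set \<Rightarrow> bool" where
  "planar_order E src tgt prec \<longleftrightarrow>
     strict_linear_on E prec \<and>
     (\<forall>e1 e2. edge_reach E src tgt e1 e2 \<longrightarrow> (e1, e2) \<in> prec) \<and>
     (\<forall>e1 e2 e3. (e1, e2) \<in> prec \<and> (e2, e3) \<in> prec \<and> edge_reach E src tgt e1 e3 \<longrightarrow>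
        edge_reach E src tgt e1 e2 \<or> edge_reach E src tgt e2 e3)"

type_synonym point = "real \<times> real"

text \<open>pos places vertices, gam e is a simple arc (parametrised on [0,1]) for edge e;
  the rectangle is [a,b] x [c,d].\<close>
definition BP_embedding ::
  "'v set \<Rightarrow> 'e set \<Rightarrow> ('e \<Rightarrow> 'v) \<Rightarrow> ('e \<Rightarrow> 'v) \<Rightarrow> ('v \<Rightarrow> point) \<Rightarrow> ('e \<Rightarrow> real \<Rightarrow> point)
   \<Rightarrow> real \<Rightarrow> real \<Rightarrow> real \<Rightarrow> real \<Rightarrow> bool" where
  "BP_embedding V E src tgt pos gam a b c d \<longleftrightarrow>
     a < b \<and> c < d \<and>
     inj_on pos V \<and>
     (\<forall>e\<in>E. arc (gam e) \<and> pathstart (gam e) = pos (src e) \<and> pathfinish (gam e) = pos (tgt e)) \<and>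
     (\<forall>e\<in>E. \<forall>e'\<in>E. e \<noteq> e' \<longrightarrow>
        path_image (gam e) \<inter> path_image (gam e') \<subseteq> pos ` ({src e, tgt e} \<inter> {src e', tgt e'})) \<and>
     (\<forall>v\<in>V. \<forall>e\<in>E. pos v \<in> path_image (gam e) \<longrightarrow> v = src e \<or> v = tgt e) \<and>
     (\<forall>v. is_source V E tgt v \<longrightarrow> snd (pos v) = d \<and> a \<le> fst (pos v) \<and> fst (pos v) \<le> b) \<and>
     (\<forall>v. is_sink V E src v \<longrightarrow> snd (pos v) = c \<and> a \<le> fst (pos v) \<and> fst (pos v) \<le> b) \<and>
     (\<forall>v. internal_vertex V E src tgt v \<longrightarrow>
        a < fst (pos v) \<and> fst (pos v) < b \<and> c < snd (pos v) \<and> snd (pos v) < d) \<and>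
     (\<forall>e\<in>E. \<forall>t. 0 < t \<and> t < 1 \<longrightarrow>
        a < fst (gam e t) \<and> fst (gam e t) < b \<and> c < snd (gam e t) \<and> snd (gam e t) < d)"

definition upward_BP_embedding ::
  "'v set \<Rightarrow> 'e set \<Rightarrow> ('e \<Rightarrow> 'v) \<Rightarrow> ('e \<Rightarrow> 'v) \<Rightarrow> ('v \<Rightarrow> point) \<Rightarrow> ('e \<Rightarrow> real \<Rightarrow> point)
   \<Rightarrow> real \<Rightarrow> real \<Rightarrow> real \<Rightarrow> real \<Rightarrow> bool" where
  "upward_BP_embedding V E src tgt pos gam a b c d \<longleftrightarrow>
     BP_embedding V E src tgt pos gam a b c d \<and>
     (\<forall>e\<in>E. \<forall>s t. 0 \<le> s \<and> s < t \<and> t \<le> 1 \<longrightarrow> snd (gam e t) < snd (gam e s))"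

text \<open>Heights d = ys 0 > ys 1 > ... > ys n = c; no vertex on the inner lines;
  at most one internal vertex in each (open) strip j, between ys j and ys (j-1).\<close>
definition valid_cut ::
  "'v set \<Rightarrow> 'e set \<Rightarrow> ('e \<Rightarrow> 'v) \<Rightarrow> ('e \<Rightarrow> 'v) \<Rightarrow> ('v \<Rightarrow> point) \<Rightarrow> real \<Rightarrow> real
   \<Rightarrow> nat \<Rightarrow> (nat \<Rightarrow> real) \<Rightarrow> bool" where
  "valid_cut V E src tgt pos c d n ys \<longleftrightarrow>
     1 \<le> n \<and> ys 0 = d \<and> ys n = c \<and> (\<forall>j<n. ys (Suc j) < ys j) \<and>
     (\<forall>j. 0 < j \<and> j < n \<longrightarrow> (\<forall>v\<in>V. snd (pos v) \<noteq> ys j)) \<and>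
     (\<forall>j\<in>{1..n}. \<forall>v w. internal_vertex V E src tgt v \<and> internal_vertex V E src tgt w \<and>
         ys j < snd (pos v) \<and> snd (pos v) < ys (j - 1) \<and>
         ys j < snd (pos w) \<and> snd (pos w) < ys (j - 1) \<longrightarrow> v = w)"

definition xcross :: "('e \<Rightarrow> real \<Rightarrow> point) \<Rightarrow> 'e \<Rightarrow> real \<Rightarrow> real" where
  "xcross gam e y = fst (gam e (THE t. 0 \<le> t \<and> t \<le> 1 \<and> snd (gam e t) = y))"

text \<open>Edges of the elementary graph of strip j (pieces of edges of G meeting the strip).\<close>
definition strip_edges ::
  "'e set \<Rightarrow> ('e \<Rightarrow> 'v) \<Rightarrow> ('e \<Rightarrow> 'v) \<Rightarrow> ('v \<Rightarrow> point) \<Rightarrow> (nat \<Rightarrow> real) \<Rightarrow> nat \<Rightarrow> 'e set" where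
  "strip_edges E src tgt pos ys j =
     {e \<in> E. snd (pos (tgt e)) < ys (j - 1) \<and> ys j < snd (pos (src e))}"

text \<open>Edges crossing the cut line at height ys j (outputs of strip j = inputs of strip j+1).\<close>
definition cut_edges ::
  "'e set \<Rightarrow> ('e \<Rightarrow> 'v) \<Rightarrow> ('e \<Rightarrow> 'v) \<Rightarrow> ('v \<Rightarrow> point) \<Rightarrow> (nat \<Rightarrow> real) \<Rightarrow> nat \<Rightarrow> 'e set" where
  "cut_edges E src tgt pos ys j =
     {e \<in> E. snd (pos (tgt e)) < ys j \<and> ys j < snd (pos (src e))}"

definition strip_vertex ::
  "'v set \<Rightarrow> 'e set \<Rightarrow> ('e \<Rightarrow> 'v) \<Rightarrow> ('e \<Rightarrow> 'v) \<Rightarrow> ('v \<Rightarrow> point) \<Rightarrow> (nat \<Rightarrow> real) \<Rightarrow> nat \<Rightarrow> 'v \<Rightarrow> bool" where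
  "strip_vertex V E src tgt pos ys j v \<longleftrightarrow>
     internal_vertex V E src tgt v \<and> ys j < snd (pos v) \<and> snd (pos v) < ys (j - 1)"

definition in_star ::
  "'v set \<Rightarrow> 'e set \<Rightarrow> ('e \<Rightarrow> 'v) \<Rightarrow> ('e \<Rightarrow> 'v) \<Rightarrow> ('v \<Rightarrow> point) \<Rightarrow> (nat \<Rightarrow> real) \<Rightarrow> nat \<Rightarrow> 'e \<Rightarrow> bool" where
  "in_star V E src tgt pos ys j e \<longleftrightarrow>
     (\<exists>v. strip_vertex V E src tgt pos ys j v \<and> (src e = v \<or> tgt e = v))"

text \<open>Left-to-right position of the component of e in strip j: x-coordinate at the top
  line of the strip (for the star: leftmost incoming edge).\<close>
definition comp_key ::
  "'v set \<Rightarrow> 'e set \<Rightarrow> ('e \<Rightarrow> 'v) \<Rightarrow> ('e \<Rightarrow> 'v) \<Rightarrow> ('v \<Rightarrow> point) \<Rightarrow> ('e \<Rightarrow> real \<Rightarrow> point)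
   \<Rightarrow> (nat \<Rightarrow> real) \<Rightarrow> nat \<Rightarrow> 'e \<Rightarrow> real" where
  "comp_key V E src tgt pos gam ys j e =
     (if in_star V E src tgt pos ys j e
      then (let v = (THE v. strip_vertex V E src tgt pos ys j v) in
            Min ((\<lambda>e'. xcross gam e' (ys (j - 1))) ` in_edges E tgt v))
      else xcross gam e (ys (j - 1)))"

text \<open>Canonical order of the elementary embedding in strip j: components from left to
  right; within the star, I(v) from left to right, then O(v) from left to right.\<close>
definition canon_less ::
  "'v set \<Rightarrow> 'e set \<Rightarrow> ('e \<Rightarrow> 'v) \<Rightarrow> ('e \<Rightarrow> 'v) \<Rightarrow> ('v \<Rightarrow> point) \<Rightarrow> ('e \<Rightarrow> real \<Rightarrow> point)
   \<Rightarrow> (nat \<Rightarrow> real) \<Rightarrow> nat \<Rightarrow> 'e \<Rightarrow> 'e \<Rightarrow> bool" where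
  "canon_less V E src tgt pos gam ys j e e' \<longleftrightarrow>
     e \<in> strip_edges E src tgt pos ys j \<and> e' \<in> strip_edges E src tgt pos ys j \<and>
     (comp_key V E src tgt pos gam ys j e < comp_key V E src tgt pos gam ys j e' \<or>
      (in_star V E src tgt pos ys j e \<and> in_star V E src tgt pos ys j e' \<and>
       (let v = (THE v. strip_vertex V E src tgt pos ys j v) in
         (tgt e = v \<and> src e' = v) \<or>
         (tgt e = v \<and> tgt e' = v \<and> xcross gam e (ys (j - 1)) < xcross gam e' (ys (j - 1))) \<or>
         (src e = v \<and> src e' = v \<and> xcross gam e (ys j) < xcross gam e' (ys j)))))"

definition canon_list ::
  "'v set \<Rightarrow> 'e set \<Rightarrow> ('e \<Rightarrow> 'v) \<Rightarrow> ('e \<Rightarrow> 'v) \<Rightarrow> ('v \<Rightarrow> point) \<Rightarrow> ('e \<Rightarrow> real \<Rightarrow> point)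
   \<Rightarrow> (nat \<Rightarrow> real) \<Rightarrow> nat \<Rightarrow> 'e list" where
  "canon_list V E src tgt pos gam ys j =
     (THE L. distinct L \<and> set L = strip_edges E src tgt pos ys j \<and>
             sorted_wrt (canon_less V E src tgt pos gam ys j) L)"

text \<open>Split a list at the elements of X: xs = s0 @ [x1] @ s1 @ ... @ [xn] @ sn
  is returned as (s0, [(x1,s1), ..., (xn,sn)]).\<close>
fun cut_segs :: "'e set \<Rightarrow> 'e list \<Rightarrow> 'e list \<times> ('e \<times> 'e list) list" where
  "cut_segs X [] = ([], [])"
| "cut_segs X (x # xs) =
     (let (s, r) = cut_segs X xs in if x \<in> X then ([], (x, s) # r) else (x # s, r))"

text \<open>The order prec2 o prec1: C lists E(G1) by prec1, L lists E(G2) by prec2, X is the set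
  of glued edges (outputs o_k of G1, which are the inputs i_k of G2). The result lists
  Q_1, e_1, P_1, ..., Q_n, e_n, P_n; the new edge e_k is named by o_k.\<close>
definition compose_order :: "'e set \<Rightarrow> 'e list \<Rightarrow> 'e list \<Rightarrow> 'e list" where
  "compose_order X C L =
     (let (q0, rc) = cut_segs X C;
          (p0, rl) = cut_segs X L;
          Qs = q0 # map snd (butlast rc);
          Os = map fst rc;
          Ps = map snd rl
      in concat (map (\<lambda>(q, x, p). q @ [x] @ p) (zip Qs (zip Os Ps))))"

fun stack_order ::
  "(nat \<Rightarrow> 'e list) \<Rightarrow> (nat \<Rightarrow> 'e set) \<Rightarrow> nat \<Rightarrow> 'e list" where
  "stack_order L X 0 = []"
| "stack_order L X (Suc 0) = L 1"
| "stack_order L X (Suc (Suc j)) = compose_order (X (Suc j)) (stack_order L X (Suc j)) (L (Suc (Suc j)))"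

definition list_order :: "'e list \<Rightarrow> ('e \<times> 'e) set" where
  "list_order xs = {(xs ! i, xs ! k) | i k. i < k \<and> k < length xs}"

definition embedding_order ::
  "'v set \<Rightarrow> 'e set \<Rightarrow> ('e \<Rightarrow> 'v) \<Rightarrow> ('e \<Rightarrow> 'v) \<Rightarrow> ('v \<Rightarrow> point) \<Rightarrow> ('e \<Rightarrow> real \<Rightarrow> point)
   \<Rightarrow> nat \<Rightarrow> (nat \<Rightarrow> real) \<Rightarrow> ('e \<times> 'e) set" where
  "embedding_order V E src tgt pos gam n ys =
     list_order (stack_order (canon_list V E src tgt pos gam ys) (cut_edges E src tgt pos ys) n)"

end

theory Submission
  imports Defs
begin


locale PG =
  fixes V :: "'v set" and E :: "'e set" and src tgt :: "'e \<Rightarrow> 'v"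
    and prec :: "('e \<times> 'e) set"
  assumes pg: "progressive_graph V E src tgt"
    and po: "planar_order E src tgt prec"
begin

abbreviation "Iv v \<equiv> in_edges E tgt v"
abbreviation "Ov v \<equiv> out_edges E src v"
abbreviation "lt x y \<equiv> (x, y) \<in> prec"
abbreviation "reach \<equiv> edge_reach E src tgt"
abbreviation "intv \<equiv> internal_vertex V E src tgt"

lemma finE: "finite E" and finV: "finite V" and srcV: "e \<in> E \<Longrightarrow> src e \<in> V"
  and tgtV: "e \<in> E \<Longrightarrow> tgt e \<in> V"
  using pg unfolding progressive_graph_def by auto

lemma acyc: "acyclic {(src e, tgt e) | e. e \<in> E}"
  using pg unfolding progressive_graph_def by auto

lemma noloop: "e \<in> E \<Longrightarrow> src e \<noteq> tgt e"
proof
  assume "e \<in> E" "src e = tgt e"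
  then have "(src e, src e) \<in> {(src e, tgt e) | e. e \<in> E}" by force
  then show False using acyc unfolding acyclic_def by blast
qed

lemma finI: "finite (Iv v)" and finO: "finite (Ov v)"
  using finE unfolding in_edges_def out_edges_def by auto

lemma I_mem: "e \<in> Iv v \<longleftrightarrow> e \<in> E \<and> tgt e = v"
  and O_mem: "e \<in> Ov v \<longleftrightarrow> e \<in> E \<and> src e = v"
  unfolding in_edges_def out_edges_def by auto

lemma source_O: assumes "v \<in> V" "Iv v = {}" shows "\<exists>e. Ov v = {e}"
proof -
  have "is_source V E tgt v" using assms unfolding is_source_def by auto
  then have "degree E src tgt v = 1" using pg unfolding progressive_graph_def by auto
  then have "card (Ov v) = 1" using assms unfolding degree_def by simp
  then show ?thesis by (simp add: card_1_singleton_iff)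
qed

lemma sink_I: assumes "v \<in> V" "Ov v = {}" shows "\<exists>e. Iv v = {e}"
proof -
  have "is_sink V E src v" using assms unfolding is_sink_def by auto
  then have "degree E src tgt v = 1" using pg unfolding progressive_graph_def by auto
  then have "card (Iv v) = 1" using assms unfolding degree_def by simp
  then show ?thesis by (simp add: card_1_singleton_iff)
qed

lemma intv_iff: "intv v \<longleftrightarrow> v \<in> V \<and> Iv v \<noteq> {} \<and> Ov v \<noteq> {}"
proof
  assume a: "intv v"
  then have v: "v \<in> V" and d: "degree E src tgt v \<noteq> 1" unfolding internal_vertex_def by auto
  show "v \<in> V \<and> Iv v \<noteq> {} \<and> Ov v \<noteq> {}"
  proof (intro conjI v notI)
    assume "Iv v = {}"
    then have "is_source V E tgt v" using v unfolding is_source_def by auto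
    then show False using d pg unfolding progressive_graph_def by auto
  next
    assume "Ov v = {}"
    then have "is_sink V E src v" using v unfolding is_sink_def by auto
    then show False using d pg unfolding progressive_graph_def by auto
  qed
next
  assume "v \<in> V \<and> Iv v \<noteq> {} \<and> Ov v \<noteq> {}"
  then have "card (Iv v) \<ge> 1" "card (Ov v) \<ge> 1" using finI finO
    by (auto simp: Suc_le_eq card_gt_0_iff)
  then show "intv v" using \<open>v \<in> V \<and> _\<close> unfolding internal_vertex_def degree_def by auto
qed

lemma src_cases: assumes "e \<in> E" shows "intv (src e) \<or> Ov (src e) = {e} \<and> Iv (src e) = {}"
proof -
  have v: "src e \<in> V" "e \<in> Ov (src e)" using assms srcV O_mem by auto
  show ?thesis
  proof (cases "Iv (src e) = {}")
    case True
    then obtain e' where "Ov (src e) = {e'}" using source_O v by blast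
    then show ?thesis using v True by auto
  next
    case False
    then have "intv (src e)" using v intv_iff by blast
    then show ?thesis by blast
  qed
qed

lemma tgt_cases: assumes "e \<in> E" shows "intv (tgt e) \<or> Iv (tgt e) = {e} \<and> Ov (tgt e) = {}"
proof -
  have v: "tgt e \<in> V" "e \<in> Iv (tgt e)" using assms tgtV I_mem by auto
  show ?thesis
  proof (cases "Ov (tgt e) = {}")
    case True
    then obtain e' where "Iv (tgt e) = {e'}" using sink_I v by blast
    then show ?thesis using v True by auto
  next
    case False
    then have "intv (tgt e)" using v intv_iff by blast
    then show ?thesis by blast
  qed
qed

lemma slo: "strict_linear_on E prec" using po unfolding planar_order_def by auto
lemma precE: "lt x y \<Longrightarrow> x \<in> E \<and> y \<in> E" using slo unfolding strict_linear_on_def by auto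
lemma prec_trans: "lt x y \<Longrightarrow> lt y z \<Longrightarrow> lt x z"
  using slo unfolding strict_linear_on_def by (meson transD)
lemma prec_irr: "\<not> lt x x"
proof
  assume "lt x x"
  moreover then have "x \<in> E" using precE by blast
  ultimately show False using slo unfolding strict_linear_on_def by blast
qed
lemma prec_total: "x \<in> E \<Longrightarrow> y \<in> E \<Longrightarrow> x \<noteq> y \<Longrightarrow> lt x y \<or> lt y x"
  using slo unfolding strict_linear_on_def by blast
lemma P1: "reach x y \<Longrightarrow> lt x y" using po unfolding planar_order_def by simp
lemma P2: "lt x y \<Longrightarrow> lt y z \<Longrightarrow> reach x z \<Longrightarrow> reach x y \<or> reach y z"
  using po unfolding planar_order_def by (elim conjE allE[of _ x] allE[of _ y] allE[of _ z]) simp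

lemma reach_adj: "x \<in> E \<Longrightarrow> y \<in> E \<Longrightarrow> tgt x = src y \<Longrightarrow> x \<noteq> y \<Longrightarrow> reach x y"
  unfolding edge_reach_def by auto

definition rk :: "'e \<Rightarrow> nat" where "rk e = card {e' \<in> E. lt e' e}"

lemma rk_mono: assumes "lt x y" shows "rk x < rk y"
proof -
  have xy: "x \<in> E" "y \<in> E" using precE assms by auto
  have "{e' \<in> E. lt e' x} \<subset> {e' \<in> E. lt e' y}"
    using assms xy prec_trans prec_irr by blast
  then show ?thesis unfolding rk_def by (intro psubset_card_mono) (auto simp: finE)
qed

lemma rk_less: "x \<in> E \<Longrightarrow> y \<in> E \<Longrightarrow> lt x y \<longleftrightarrow> rk x < rk y"
proof
  assume "x \<in> E" "y \<in> E" "rk x < rk y"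
  then have "x \<noteq> y" by auto
  then have "lt x y \<or> lt y x" using prec_total \<open>x \<in> E\<close> \<open>y \<in> E\<close> by blast
  then show "lt x y" using rk_mono[of y x] \<open>rk x < rk y\<close> by linarith
qed (rule rk_mono)

lemma rk_inj: "x \<in> E \<Longrightarrow> y \<in> E \<Longrightarrow> rk x = rk y \<Longrightarrow> x = y"
proof (rule ccontr)
  assume "x \<in> E" "y \<in> E" "rk x = rk y" "x \<noteq> y"
  then have "lt x y \<or> lt y x" using prec_total by blast
  then show False using rk_mono[of y x] rk_mono[of x y] \<open>rk x = rk y\<close> by linarith
qed

lemma rk_lt: assumes "x \<in> E" shows "rk x < card E"
proof -
  have "{e' \<in> E. lt e' x} \<subset> E" using assms prec_irr by blast
  then show ?thesis unfolding rk_def by (intro psubset_card_mono) (auto simp: finE)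
qed


definition Hn :: "'v \<Rightarrow> nat" where
  "Hn v = (if Iv v = {} then card E + 1 else if Ov v = {} then 0 else card E - Min (rk ` Ov v))"
definition Pn :: "'v \<Rightarrow> nat" where
  "Pn v = (if Ov v \<noteq> {} then Min (rk ` Ov v) else Min (rk ` Iv v))"

lemma src_nonint: assumes "e \<in> E" "\<not> intv (src e)"
  shows "Hn (src e) = card E + 1" "Pn (src e) = rk e"
  using src_cases[OF assms(1)] assms(2) unfolding Hn_def Pn_def by auto

lemma tgt_nonint: assumes "e \<in> E" "\<not> intv (tgt e)"
  shows "Hn (tgt e) = 0" "Pn (tgt e) = rk e"
  using tgt_cases[OF assms(1)] assms(2) unfolding Hn_def Pn_def by auto

lemma int_data: assumes "intv v"
  obtains c where "c \<in> Ov v" "Pn v = rk c" "Hn v = card E - rk c" "\<And>c'. c' \<in> Ov v \<Longrightarrow> rk c \<le> rk c'"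
proof -
  have ne: "Iv v \<noteq> {}" "Ov v \<noteq> {}" using assms intv_iff by auto
  have "Min (rk ` Ov v) \<in> rk ` Ov v" using ne finO by (intro Min_in) auto
  then obtain c where c: "c \<in> Ov v" "Min (rk ` Ov v) = rk c" by auto
  have "\<And>c'. c' \<in> Ov v \<Longrightarrow> rk c \<le> rk c'" using c finO by (metis Min_le finite_imageI imageI)
  then show ?thesis using that c ne unfolding Hn_def Pn_def by auto
qed

lemma int_H: assumes "intv v" shows "1 \<le> Hn v" "Hn v \<le> card E"
proof -
  obtain c where c: "c \<in> Ov v" "Hn v = card E - rk c" using int_data assms by metis
  have "rk c < card E" using c O_mem rk_lt by auto
  then show "1 \<le> Hn v" "Hn v \<le> card E" using c by auto
qed

lemma Hn_inj: assumes "intv v" "intv w" "Hn v = Hn w" shows "v = w"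
proof -
  obtain c where c: "c \<in> Ov v" "Hn v = card E - rk c" using int_data assms(1) by metis
  obtain d where d: "d \<in> Ov w" "Hn w = card E - rk d" using int_data assms(2) by metis
  have "rk c < card E" "rk d < card E" using c d O_mem rk_lt by auto
  then have "rk c = rk d" using c d assms(3) by auto
  then have "c = d" using rk_inj c d O_mem by auto
  then show ?thesis using c d O_mem by auto
qed

lemma H_edge: assumes "e \<in> E" shows "Hn (tgt e) < Hn (src e)"
proof (cases "intv (src e)")
  case False
  then have "Hn (src e) = card E + 1" using src_nonint assms by auto
  moreover have "Hn (tgt e) \<le> card E"
    using int_H tgt_nonint assms by (cases "intv (tgt e)") auto
  ultimately show ?thesis by auto
next
  case True
  obtain c where c: "c \<in> Ov (src e)" "Hn (src e) = card E - rk c" "rk c \<le> rk e"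
    using int_data[OF True] assms O_mem by metis
  have ce: "rk e < card E" using rk_lt assms by auto
  show ?thesis
  proof (cases "intv (tgt e)")
    case False
    then show ?thesis using tgt_nonint assms c ce by auto
  next
    case True
    obtain d where d: "d \<in> Ov (tgt e)" "Hn (tgt e) = card E - rk d"
      using int_data[OF True] by metis
    have "d \<in> E" "src d = tgt e" using d O_mem by auto
    moreover have "e \<noteq> d" using noloop assms \<open>src d = tgt e\<close> by metis
    ultimately have "reach e d" using reach_adj assms by auto
    then have "rk e < rk d" using P1 rk_mono by blast
    moreover have "rk d < card E" using rk_lt \<open>d \<in> E\<close> by auto
    ultimately show ?thesis using c d ce by auto
  qed
qed

lemma H_edge_r: "e \<in> E \<Longrightarrow> real (Hn (tgt e)) + 1 \<le> real (Hn (src e))"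
  using H_edge by (metis Suc_leI of_nat_Suc of_nat_le_iff add.commute)

lemma Pn_src: assumes "e \<in> E" shows "Pn (src e) < card E"
proof (cases "intv (src e)")
  case True
  then obtain c where "c \<in> Ov (src e)" "Pn (src e) = rk c" using int_data by metis
  then show ?thesis using rk_lt O_mem by auto
qed (use src_nonint assms rk_lt in auto)

lemma Pn_tgt: assumes "e \<in> E" shows "Pn (tgt e) < card E"
proof (cases "intv (tgt e)")
  case True
  then obtain c where "c \<in> Ov (tgt e)" "Pn (tgt e) = rk c" using int_data by metis
  then show ?thesis using rk_lt O_mem by auto
qed (use tgt_nonint assms rk_lt in auto)

definition Xf :: "'e \<Rightarrow> real \<Rightarrow> real" where
  "Xf e y = real (rk e)
     + (real (Pn (src e)) - real (rk e)) * max 0 (3 * (y - real (Hn (src e))) + 1)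
     + (real (Pn (tgt e)) - real (rk e)) * max 0 (3 * (real (Hn (tgt e)) - y) + 1)"

lemma X_plain:
  assumes "e \<in> E" "real (Hn (tgt e)) \<le> y" "y \<le> real (Hn (src e))"
    "intv (src e) \<Longrightarrow> y \<le> real (Hn (src e)) - 1/3"
    "intv (tgt e) \<Longrightarrow> real (Hn (tgt e)) + 1/3 \<le> y"
  shows "Xf e y = real (rk e)"
proof -
  have 1: "(real (Pn (src e)) - real (rk e)) * max 0 (3 * (y - real (Hn (src e))) + 1) = 0"
    using assms src_nonint[OF assms(1)] by (cases "intv (src e)") auto
  have 2: "(real (Pn (tgt e)) - real (rk e)) * max 0 (3 * (real (Hn (tgt e)) - y) + 1) = 0"
    using assms tgt_nonint[OF assms(1)] by (cases "intv (tgt e)") auto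
  show ?thesis unfolding Xf_def 1 2 by simp
qed

lemma X_in:
  assumes "e \<in> E" "real (Hn (tgt e)) \<le> y" "y \<le> real (Hn (tgt e)) + 1/3"
  shows "Xf e y = real (rk e) + (real (Pn (tgt e)) - real (rk e)) * (3 * (real (Hn (tgt e)) - y) + 1)"
proof -
  have "real (Hn (tgt e)) + 1 \<le> real (Hn (src e))" using H_edge_r assms by auto
  then have 1: "max 0 (3 * (y - real (Hn (src e))) + 1) = 0" using assms by auto
  have 2: "max 0 (3 * (real (Hn (tgt e)) - y) + 1) = 3 * (real (Hn (tgt e)) - y) + 1" using assms by auto
  show ?thesis unfolding Xf_def 1 2 by simp
qed

lemma X_out:
  assumes "e \<in> E" "real (Hn (src e)) - 1/3 \<le> y" "y \<le> real (Hn (src e))"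
  shows "Xf e y = real (rk e) + (real (Pn (src e)) - real (rk e)) * (3 * (y - real (Hn (src e))) + 1)"
proof -
  have "real (Hn (tgt e)) + 1 \<le> real (Hn (src e))" using H_edge_r assms by auto
  then have 1: "max 0 (3 * (real (Hn (tgt e)) - y) + 1) = 0" using assms by auto
  have 2: "max 0 (3 * (y - real (Hn (src e))) + 1) = 3 * (y - real (Hn (src e))) + 1" using assms by auto
  show ?thesis unfolding Xf_def 1 2 by simp
qed

lemma X_start: "e \<in> E \<Longrightarrow> Xf e (real (Hn (src e))) = real (Pn (src e))"
  using X_out[of e "real (Hn (src e))"] by simp

lemma X_end: "e \<in> E \<Longrightarrow> Xf e (real (Hn (tgt e))) = real (Pn (tgt e))"
  using X_in[of e "real (Hn (tgt e))"] by simp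

lemma cvx:
  fixes a b l lo hi :: real
  assumes "0 \<le> l" "l \<le> 1" "lo \<le> a" "a \<le> hi" "lo \<le> b" "b \<le> hi"
  shows "lo \<le> a + (b - a) * l" "a + (b - a) * l \<le> hi"
proof -
  have eq: "a + (b - a) * l = (1 - l) * a + l * b" by algebra
  have "(1 - l) * lo \<le> (1 - l) * a" "l * lo \<le> l * b"
    using assms by (auto intro: mult_left_mono)
  then show "lo \<le> a + (b - a) * l" unfolding eq by (simp add: algebra_simps)
  have "(1 - l) * a \<le> (1 - l) * hi" "l * b \<le> l * hi"
    using assms by (auto intro: mult_left_mono)
  then show "a + (b - a) * l \<le> hi" unfolding eq by (simp add: algebra_simps)
qed

lemma nat_real_le: "(a::nat) < b \<Longrightarrow> real a \<le> real b - 1"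
  by (metis Suc_leI of_nat_Suc of_nat_le_iff add.commute le_diff_eq)

lemma X_range:
  assumes "e \<in> E" "real (Hn (tgt e)) \<le> y" "y \<le> real (Hn (src e))"
  shows "0 \<le> Xf e y" "Xf e y \<le> real (card E) - 1"
proof -
  have h: "real (Hn (tgt e)) + 1 \<le> real (Hn (src e))" using H_edge_r assms by auto
  have b1: "real (rk e) \<le> real (card E) - 1" using nat_real_le rk_lt[OF assms(1)] by blast
  have b2: "real (Pn (src e)) \<le> real (card E) - 1" using nat_real_le Pn_src[OF assms(1)] by blast
  have b3: "real (Pn (tgt e)) \<le> real (card E) - 1" using nat_real_le Pn_tgt[OF assms(1)] by blast
  have "0 \<le> Xf e y \<and> Xf e y \<le> real (card E) - 1"
  proof (cases "y \<le> real (Hn (tgt e)) + 1/3")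
    case True
    have l: "0 \<le> 3 * (real (Hn (tgt e)) - y) + 1" "3 * (real (Hn (tgt e)) - y) + 1 \<le> 1"
      using True assms by auto
    show ?thesis unfolding X_in[OF assms(1,2) True]
      using cvx[OF l, of 0 "real (rk e)" "real (card E) - 1" "real (Pn (tgt e))"] b1 b3 by simp
  next
    case False
    show ?thesis
    proof (cases "real (Hn (src e)) - 1/3 \<le> y")
      case True
      have l: "0 \<le> 3 * (y - real (Hn (src e))) + 1" "3 * (y - real (Hn (src e))) + 1 \<le> 1"
        using True assms by auto
      show ?thesis unfolding X_out[OF assms(1) True assms(3)]
        using cvx[OF l, of 0 "real (rk e)" "real (card E) - 1" "real (Pn (src e))"] b1 b2 by simp
    next
      case False2: False
      have "Xf e y = real (rk e)" unfolding Xf_def using False False2 by auto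
      then show ?thesis using b1 by auto
    qed
  qed
  then show "0 \<le> Xf e y" "Xf e y \<le> real (card E) - 1" by auto
qed


lemma nat_sep: "(a::nat) \<noteq> b \<Longrightarrow> 1 \<le> \<bar>real a - real b\<bar>"
proof -
  assume "a \<noteq> b"
  then have "a < b \<or> b < a" by auto
  then show ?thesis using nat_real_le[of a b] nat_real_le[of b a] by auto
qed

lemma HL_trancl:
  assumes "(f, g) \<in> {(a, b). a \<in> E \<and> b \<in> E \<and> tgt a = src b}\<^sup>+"
  shows "g \<in> E \<and> Hn (src g) \<le> Hn (tgt f)"
  using assms
proof (induction rule: trancl_induct)
  case (base y) then show ?case by auto
next
  case (step y z)
  then show ?case using H_edge[of y] by auto
qed

lemma HL: "reach f g \<Longrightarrow> Hn (src g) \<le> Hn (tgt f)"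
  unfolding edge_reach_def using HL_trancl by blast

lemma reach_into:
  assumes "reach q p"
  shows "tgt q = src p \<or> (\<exists>x. x \<in> E \<and> tgt x = src p \<and> reach q x)"
proof -
  have qp: "(q, p) \<in> {(a, b). a \<in> E \<and> b \<in> E \<and> tgt a = src b}\<^sup>+" using assms unfolding edge_reach_def by auto
  then show ?thesis
  proof (cases rule: tranclE)
    case base then show ?thesis by auto
  next
    case (step y)
    then show ?thesis
    proof (cases "q = y")
      case True then show ?thesis using step by auto
    next
      case False then show ?thesis using step unfolding edge_reach_def by auto
    qed
  qed
qed

lemma CORE:
  assumes "a \<in> Iv w" "c \<in> Ov w" "x \<in> E" "Hn (tgt x) < Hn w" "Hn w < Hn (src x)"
  shows "rk a < rk x \<longleftrightarrow> rk c < rk x"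
proof -
  have a: "a \<in> E" "tgt a = w" and c: "c \<in> E" "src c = w" using assms I_mem O_mem by auto
  have "a \<noteq> c" using noloop a c by metis
  then have "reach a c" using reach_adj a c by auto
  then have ac: "rk a < rk c" using P1 rk_mono by blast
  have "x \<noteq> a" "x \<noteq> c" using assms a c by auto
  then have "rk x \<noteq> rk a" "rk x \<noteq> rk c" using rk_inj a c assms(3) by metis+
  have "\<not> (rk a < rk x \<and> rk x < rk c)"
  proof
    assume "rk a < rk x \<and> rk x < rk c"
    then have "lt a x" "lt x c" using rk_less a c assms(3) by auto
    then have "reach a x \<or> reach x c" using P2 \<open>reach a c\<close> by blast
    then show False
    proof
      assume "reach a x" then have "Hn (src x) \<le> Hn (tgt a)" by (rule HL)
      then show False using a assms by auto
    next
      assume "reach x c" then have "Hn (src c) \<le> Hn (tgt x)" by (rule HL)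
      then show False using c assms by auto
    qed
  qed
  then show ?thesis using ac \<open>rk x \<noteq> rk c\<close> by auto
qed

lemma SIDE:
  assumes "intv w" "x \<in> E" "Hn (tgt x) < Hn w" "Hn w < Hn (src x)"
    "f \<in> E" "src f = w \<or> tgt f = w" "g \<in> E" "src g = w \<or> tgt g = w"
  shows "rk f < rk x \<longleftrightarrow> rk g < rk x"
proof -
  obtain a0 c0 where a0: "a0 \<in> Iv w" and c0: "c0 \<in> Ov w" using assms(1) intv_iff by blast
  have key: "rk h < rk x \<longleftrightarrow> rk a0 < rk x" if "h \<in> E" "src h = w \<or> tgt h = w" for h
  proof (cases "src h = w")
    case True
    then have "h \<in> Ov w" using that O_mem by auto
    then show ?thesis using CORE[OF a0 _ assms(2-4)] by auto
  next
    case False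
    then have "h \<in> Iv w" using that I_mem by auto
    then show ?thesis using CORE[OF _ c0 assms(2-4)] CORE[OF a0 c0 assms(2-4)] by auto
  qed
  show ?thesis using key[OF assms(5,6)] key[OF assms(7,8)] by auto
qed

lemma CLS:
  assumes "intv w" "\<bar>y - real (Hn w)\<bar> < 1/3" "y \<noteq> real (Hn w)"
    "e \<in> E" "real (Hn (tgt e)) \<le> y" "y \<le> real (Hn (src e))"
  shows "((src e = w \<or> tgt e = w) \<and> Xf e y = real (rk e) + (real (Pn w) - real (rk e)) * (1 - 3 * \<bar>y - real (Hn w)\<bar>))
    \<or> (src e \<noteq> w \<and> tgt e \<noteq> w \<and> Xf e y = real (rk e) \<and> Hn (tgt e) < Hn w \<and> Hn w < Hn (src e))"
proof -
  have ab: "y - real (Hn w) < 1/3" "real (Hn w) - y < 1/3" using assms(2) abs_ge_self[of "y - real (Hn w)"] abs_ge_minus_self[of "y - real (Hn w)"] by linarith+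
  show ?thesis
proof (cases "tgt e = w")
  case True
  then have "real (Hn w) < y" using assms by auto
  then have "1 - 3 * \<bar>y - real (Hn w)\<bar> = 3 * (real (Hn (tgt e)) - y) + 1" using True by auto
  moreover have "Xf e y = real (rk e) + (real (Pn (tgt e)) - real (rk e)) * (3 * (real (Hn (tgt e)) - y) + 1)"
    using X_in[OF assms(4,5)] assms True by auto
  ultimately show ?thesis using True by auto
next
  case tF: False
  show ?thesis
  proof (cases "src e = w")
    case True
    then have "y < real (Hn w)" using assms by auto
    then have "1 - 3 * \<bar>y - real (Hn w)\<bar> = 3 * (y - real (Hn (src e))) + 1" using True by auto
    moreover have "Xf e y = real (rk e) + (real (Pn (src e)) - real (rk e)) * (3 * (y - real (Hn (src e))) + 1)"
      using X_out[OF assms(4) _ assms(6)] assms True by auto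
    ultimately show ?thesis using True by auto
  next
    case sF: False
    have hw: "1 \<le> Hn w" "Hn w \<le> card E" using int_H assms(1) by auto
    have s1: "intv (src e) \<Longrightarrow> y \<le> real (Hn (src e)) - 1/3"
    proof (rule ccontr)
      assume "intv (src e)" "\<not> y \<le> real (Hn (src e)) - 1/3"
      then have "\<bar>real (Hn (src e)) - real (Hn w)\<bar> < 1" using assms ab by (auto simp: abs_less_iff)
      then have "Hn (src e) = Hn w" using nat_sep by force
      then show False using Hn_inj \<open>intv (src e)\<close> assms(1) sF by auto
    qed
    have t1: "intv (tgt e) \<Longrightarrow> real (Hn (tgt e)) + 1/3 \<le> y"
    proof (rule ccontr)
      assume "intv (tgt e)" "\<not> real (Hn (tgt e)) + 1/3 \<le> y"
      then have "\<bar>real (Hn (tgt e)) - real (Hn w)\<bar> < 1" using assms ab by (auto simp: abs_less_iff)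
      then have "Hn (tgt e) = Hn w" using nat_sep by force
      then show False using Hn_inj \<open>intv (tgt e)\<close> assms(1) tF by auto
    qed
    have X: "Xf e y = real (rk e)" using X_plain[OF assms(4,5,6) s1 t1] .
    have "real (Hn (tgt e)) < real (Hn w) + 1" using assms ab by auto
    then have "Hn (tgt e) \<le> Hn w" by linarith
    moreover have "Hn (tgt e) \<noteq> Hn w"
    proof
      assume eq: "Hn (tgt e) = Hn w"
      show False
      proof (cases "intv (tgt e)")
        case True then show False using Hn_inj eq assms(1) tF by auto
      next
        case False then show False using tgt_nonint[OF assms(4) False] eq hw by auto
      qed
    qed
    moreover have "real (Hn w) < real (Hn (src e)) + 1" using assms ab by auto
    then have "Hn w \<le> Hn (src e)" by linarith
    moreover have "Hn (src e) \<noteq> Hn w"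
    proof
      assume eq: "Hn (src e) = Hn w"
      show False
      proof (cases "intv (src e)")
        case True then show False using Hn_inj eq assms(1) sF by auto
      next
        case False then show False using src_nonint[OF assms(4) False] eq hw by auto
      qed
    qed
    ultimately show ?thesis using X sF tF by auto
  qed
qed
qed


lemma lin_mono:
  fixes a b p l :: real
  assumes "a < b" "l < 1"
  shows "a + (p - a) * l < b + (p - b) * l"
proof -
  have "b + (p - b) * l - (a + (p - a) * l) = (b - a) * (1 - l)" by algebra
  moreover have "(b - a) * (1 - l) > 0" using assms by auto
  ultimately show ?thesis by linarith
qed

lemma SW:
  assumes e1: "e1 \<in> E" and e2: "e2 \<in> E" and r: "rk e1 < rk e2"
    and p1: "real (Hn (tgt e1)) \<le> y" "y \<le> real (Hn (src e1))"
    and p2: "real (Hn (tgt e2)) \<le> y" "y \<le> real (Hn (src e2))"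
    and nv: "\<And>w. intv w \<Longrightarrow> real (Hn w) \<noteq> y"
  shows "Xf e1 y < Xf e2 y"
proof (cases "\<exists>w. intv w \<and> \<bar>y - real (Hn w)\<bar> < 1/3")
  case False
  have pl: "Xf e y = real (rk e)" if "e \<in> E" "real (Hn (tgt e)) \<le> y" "y \<le> real (Hn (src e))" for e
  proof (rule X_plain[OF that])
    show "y \<le> real (Hn (src e)) - 1/3" if "intv (src e)"
      using False that \<open>y \<le> real (Hn (src e))\<close> by (auto simp: abs_less_iff)
    show "real (Hn (tgt e)) + 1/3 \<le> y" if "intv (tgt e)"
      using False that \<open>real (Hn (tgt e)) \<le> y\<close> by (auto simp: abs_less_iff)
  qed
  show ?thesis using pl[OF e1 p1] pl[OF e2 p2] r by simp
next
  case True
  then obtain w where w: "intv w" "\<bar>y - real (Hn w)\<bar> < 1/3" by auto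
  have ny: "y \<noteq> real (Hn w)" using nv w by auto
  define l where "l = 1 - 3 * \<bar>y - real (Hn w)\<bar>"
  have l: "0 < l" "l < 1" using w ny unfolding l_def by auto
  obtain c0 where c0: "c0 \<in> Ov w" "Pn w = rk c0" using int_data[OF w(1)] by metis
  have c0E: "c0 \<in> E" "src c0 = w" using c0 O_mem by auto
  note C1 = CLS[OF w ny e1 p1, folded l_def]
  note C2 = CLS[OF w ny e2 p2, folded l_def]
  show ?thesis
  proof (cases "src e1 = w \<or> tgt e1 = w")
    case i1: True
    then have X1: "Xf e1 y = real (rk e1) + (real (rk c0) - real (rk e1)) * l" using C1 c0 by auto
    show ?thesis
    proof (cases "src e2 = w \<or> tgt e2 = w")
      case True
      then have X2: "Xf e2 y = real (rk e2) + (real (rk c0) - real (rk e2)) * l" using C2 c0 by auto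
      show ?thesis unfolding X1 X2 using lin_mono l r by auto
    next
      case False
      then have X2: "Xf e2 y = real (rk e2)" "Hn (tgt e2) < Hn w" "Hn w < Hn (src e2)" using C2 by auto
      have "rk c0 < rk e2"
        using SIDE[OF w(1) e2 X2(2,3) e1 i1 c0E(1)] c0E r by auto
      then have "real (rk e1) + (real (rk c0) - real (rk e1)) * l \<le> max (real (rk e1)) (real (rk c0))"
        using l by (intro cvx(2)[where lo = "min (real (rk e1)) (real (rk c0))"]) auto
      then show ?thesis unfolding X1 X2 using \<open>rk c0 < rk e2\<close> r by auto
    qed
  next
    case n1: False
    then have X1: "Xf e1 y = real (rk e1)" "Hn (tgt e1) < Hn w" "Hn w < Hn (src e1)" using C1 by auto
    show ?thesis
    proof (cases "src e2 = w \<or> tgt e2 = w")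
      case True
      then have X2: "Xf e2 y = real (rk e2) + (real (rk c0) - real (rk e2)) * l" using C2 c0 by auto
      have "\<not> rk c0 < rk e1"
        using SIDE[OF w(1) e1 X1(2,3) e2 True c0E(1)] c0E r by auto
      moreover have "c0 \<noteq> e1" using c0E n1 by auto
      then have "rk c0 \<noteq> rk e1" using rk_inj c0E e1 by metis
      ultimately have "rk e1 < rk c0" by auto
      have "min (real (rk e2)) (real (rk c0)) \<le> real (rk e2) + (real (rk c0) - real (rk e2)) * l"
        using l by (intro cvx(1)[where hi = "max (real (rk e2)) (real (rk c0))"]) auto
      then show ?thesis unfolding X1 X2 using \<open>rk e1 < rk c0\<close> r by auto
    next
      case False
      then have X2: "Xf e2 y = real (rk e2)" using C2 by auto
      show ?thesis unfolding X1 X2 using r by auto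
    qed
  qed
qed


lemma src_vertex: assumes "v \<in> V" "Iv v = {}"
  obtains e where "Ov v = {e}" "e \<in> E" "src e = v" "Hn v = card E + 1" "Pn v = rk e"
proof -
  obtain e where e: "Ov v = {e}" using source_O assms by blast
  then have "e \<in> E" "src e = v" using O_mem by auto
  then show ?thesis using that e assms unfolding Hn_def Pn_def by auto
qed

lemma snk_vertex: assumes "v \<in> V" "Ov v = {}"
  obtains e where "Iv v = {e}" "e \<in> E" "tgt e = v" "Hn v = 0" "Pn v = rk e"
proof -
  obtain e where e: "Iv v = {e}" using sink_I assms by blast
  then have "e \<in> E" "tgt e = v" using I_mem by auto
  then show ?thesis using that e assms unfolding Hn_def Pn_def by auto
qed

lemma Pn_V: assumes "v \<in> V" shows "Pn v < card E"
proof (cases "intv v")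
  case True
  then obtain c where "c \<in> Ov v" "Pn v = rk c" using int_data by metis
  then show ?thesis using rk_lt O_mem by auto
next
  case False
  then have "Iv v = {} \<or> Ov v = {}" using intv_iff assms by auto
  then show ?thesis
  proof
    assume "Iv v = {}" then show ?thesis using src_vertex[OF assms] rk_lt by metis
  next
    assume "Ov v = {}" then show ?thesis using snk_vertex[OF assms] rk_lt by metis
  qed
qed

lemma Hn_le: "Hn v \<le> card E + 1" unfolding Hn_def by auto

definition Yf :: "'e \<Rightarrow> real \<Rightarrow> real" where
  "Yf e t = real (Hn (src e)) - t * (real (Hn (src e)) - real (Hn (tgt e)))"
definition gm :: "'e \<Rightarrow> real \<Rightarrow> real \<times> real" where
  "gm e = (\<lambda>t. (Xf e (Yf e t), Yf e t))"
definition ps :: "'v \<Rightarrow> real \<times> real" where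
  "ps v = (real (Pn v), real (Hn v))"

lemma Yf_inv: assumes "e \<in> E" shows "Yf e t = y \<longleftrightarrow> t = (real (Hn (src e)) - y) / (real (Hn (src e)) - real (Hn (tgt e)))"
proof -
  have "real (Hn (src e)) - real (Hn (tgt e)) > 0" using H_edge_r[OF assms] by auto
  then show ?thesis unfolding Yf_def by (auto simp: field_simps)
qed

lemma pi_gm: assumes "e \<in> E"
  shows "p \<in> path_image (gm e) \<longleftrightarrow>
    real (Hn (tgt e)) \<le> snd p \<and> snd p \<le> real (Hn (src e)) \<and> fst p = Xf e (snd p)"
proof -
  have h: "real (Hn (src e)) - real (Hn (tgt e)) > 0" using H_edge_r[OF assms] by auto
  show ?thesis
  proof
    assume "p \<in> path_image (gm e)"
    then obtain t where t: "0 \<le> t" "t \<le> 1" "p = gm e t" unfolding path_image_def by auto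
    have "t * (real (Hn (src e)) - real (Hn (tgt e))) \<le> real (Hn (src e)) - real (Hn (tgt e))"
      using t h by (simp add: mult_left_le_one_le)
    moreover have "0 \<le> t * (real (Hn (src e)) - real (Hn (tgt e)))" using t h by auto
    ultimately show "real (Hn (tgt e)) \<le> snd p \<and> snd p \<le> real (Hn (src e)) \<and> fst p = Xf e (snd p)"
      using t unfolding gm_def Yf_def by auto
  next
    assume a: "real (Hn (tgt e)) \<le> snd p \<and> snd p \<le> real (Hn (src e)) \<and> fst p = Xf e (snd p)"
    define t where "t = (real (Hn (src e)) - snd p) / (real (Hn (src e)) - real (Hn (tgt e)))"
    have "Yf e t = snd p" using Yf_inv[OF assms] t_def by auto
    moreover have "0 \<le> t" "t \<le> 1" using a h unfolding t_def by (auto simp: field_simps)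
    ultimately have "gm e t = p" "t \<in> {0..1}" using a unfolding gm_def by (auto simp: prod_eq_iff)
    then show "p \<in> path_image (gm e)" unfolding path_image_def by force
  qed
qed

lemma xcross_gm: assumes "e \<in> E" "real (Hn (tgt e)) \<le> y" "y \<le> real (Hn (src e))"
  shows "xcross gm e y = Xf e y"
proof -
  have h: "real (Hn (src e)) - real (Hn (tgt e)) > 0" using H_edge_r[OF assms(1)] by auto
  define t where "t = (real (Hn (src e)) - y) / (real (Hn (src e)) - real (Hn (tgt e)))"
  have ty: "Yf e t = y" using Yf_inv[OF assms(1)] t_def by auto
  have "0 \<le> t" "t \<le> 1" using assms h unfolding t_def by (auto simp: field_simps)
  have "(THE t. 0 \<le> t \<and> t \<le> 1 \<and> snd (gm e t) = y) = t"
  proof (rule the_equality)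
    show "0 \<le> t \<and> t \<le> 1 \<and> snd (gm e t) = y" using ty \<open>0 \<le> t\<close> \<open>t \<le> 1\<close> unfolding gm_def by auto
    show "t' = t" if "0 \<le> t' \<and> t' \<le> 1 \<and> snd (gm e t') = y" for t'
      using that Yf_inv[OF assms(1)] t_def unfolding gm_def by auto
  qed
  then show ?thesis unfolding xcross_def gm_def using ty by simp
qed

lemma arc_gm: assumes "e \<in> E" shows "arc (gm e)"
  unfolding arc_def
proof
  show "path (gm e)" unfolding path_def gm_def Xf_def Yf_def
    by (intro continuous_intros continuous_on_max)
  show "inj_on (gm e) {0..1}"
  proof (rule inj_onI)
    fix s t assume "gm e s = gm e t"
    then have "Yf e s = Yf e t" unfolding gm_def by auto
    then show "s = t" using Yf_inv[OF assms] by metis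
  qed
qed

lemma AT_W:
  assumes "intv w" "f \<in> E" "real (Hn (tgt f)) \<le> real (Hn w)" "real (Hn w) \<le> real (Hn (src f))"
  shows "((src f = w \<or> tgt f = w) \<and> Xf f (real (Hn w)) = real (Pn w))
    \<or> (src f \<noteq> w \<and> tgt f \<noteq> w \<and> Xf f (real (Hn w)) = real (rk f))"
proof (cases "src f = w")
  case True then show ?thesis using X_start[OF assms(2)] by auto
next
  case sF: False
  show ?thesis
  proof (cases "tgt f = w")
    case True then show ?thesis using X_end[OF assms(2)] by auto
  next
    case tF: False
    have s1: "real (Hn w) \<le> real (Hn (src f)) - 1/3" if "intv (src f)"
    proof -
      have "Hn (src f) \<noteq> Hn w" using Hn_inj that assms(1) sF by auto
      then show ?thesis using nat_sep[of "Hn (src f)" "Hn w"] assms(4) by (auto split: abs_split)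
    qed
    have t1: "real (Hn (tgt f)) + 1/3 \<le> real (Hn w)" if "intv (tgt f)"
    proof -
      have "Hn (tgt f) \<noteq> Hn w" using Hn_inj that assms(1) tF by auto
      then show ?thesis using nat_sep[of "Hn (tgt f)" "Hn w"] assms(3) by (auto split: abs_split)
    qed
    show ?thesis using X_plain[OF assms(2,3,4) s1 t1] sF tF by auto
  qed
qed


lemma ps_inj: "inj_on ps V"
proof (rule inj_onI)
  fix v w assume v: "v \<in> V" and w: "w \<in> V" and eq: "ps v = ps w"
  then have P: "Pn v = Pn w" and H: "Hn v = Hn w" unfolding ps_def by auto
  have cls: "intv u \<or> (Iv u = {} \<and> u \<in> V) \<or> (Ov u = {} \<and> u \<in> V)" if "u \<in> V" for u
    using intv_iff that by auto
  show "v = w"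
  proof (cases "intv v")
    case True
    show ?thesis
    proof (cases "intv w")
      case True then show ?thesis using Hn_inj \<open>intv v\<close> H by auto
    next
      case False
      then have "Hn w = card E + 1 \<or> Hn w = 0"
        using cls[OF w] src_vertex[OF w] snk_vertex[OF w] by metis
      then show ?thesis using int_H[OF \<open>intv v\<close>] H by auto
    qed
  next
    case False
    show ?thesis
    proof (cases "intv w")
      case True
      have "Hn v = card E + 1 \<or> Hn v = 0"
        using False cls[OF v] src_vertex[OF v] snk_vertex[OF v] by metis
      then show ?thesis using int_H[OF True] H by auto
    next
      case wF: False
      show ?thesis
      proof (cases "Iv v = {}")
        case True
        obtain ev where ev: "ev \<in> E" "src ev = v" "Hn v = card E + 1" "Pn v = rk ev"
          using src_vertex[OF v True] by metis
        have "Iv w = {}"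
        proof (rule ccontr)
          assume "Iv w \<noteq> {}" then have "Ov w = {}" using cls[OF w] wF by auto
          then obtain e0 where "Hn w = 0" using snk_vertex[OF w] by metis
          then show False using ev H by auto
        qed
        then obtain ew where ew: "ew \<in> E" "src ew = w" "Pn w = rk ew"
          using src_vertex[OF w] by metis
        then have "ev = ew" using rk_inj ev P by metis
        then show ?thesis using ev ew by auto
      next
        case ivF: False
        then have "Ov v = {}" using cls[OF v] False by auto
        then obtain ev where ev: "ev \<in> E" "tgt ev = v" "Hn v = 0" "Pn v = rk ev"
          using snk_vertex[OF v] by metis
        have "Ov w = {}"
        proof (rule ccontr)
          assume "Ov w \<noteq> {}" then have "Iv w = {}" using cls[OF w] wF by auto
          then obtain e0 where "Hn w = card E + 1" using src_vertex[OF w] by metis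
          then show False using ev H by auto
        qed
        then obtain ew where ew: "ew \<in> E" "tgt ew = w" "Pn w = rk ew"
          using snk_vertex[OF w] by metis
        then have "ev = ew" using rk_inj ev P by metis
        then show ?thesis using ev ew by auto
      qed
    qed
  qed
qed

lemma edges_disjoint:
  assumes e: "e \<in> E" and e': "e' \<in> E" and ne: "e \<noteq> e'"
    and p: "p \<in> path_image (gm e)" "p \<in> path_image (gm e')"
  shows "p \<in> ps ` ({src e, tgt e} \<inter> {src e', tgt e'})"
proof -
  define y where "y = snd p"
  have r1: "real (Hn (tgt e)) \<le> y" "y \<le> real (Hn (src e))" "fst p = Xf e y"
    using p pi_gm[OF e] y_def by auto
  have r2: "real (Hn (tgt e')) \<le> y" "y \<le> real (Hn (src e'))" "fst p = Xf e' y"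
    using p pi_gm[OF e'] y_def by auto
  have rne: "rk e \<noteq> rk e'" using rk_inj e e' ne by metis
  show ?thesis
  proof (cases "\<exists>w. intv w \<and> real (Hn w) = y")
    case False
    then have nv: "\<And>w. intv w \<Longrightarrow> real (Hn w) \<noteq> y" by auto
    have "rk e < rk e' \<or> rk e' < rk e" using rne by auto
    then show ?thesis
    proof
      assume "rk e < rk e'" then have "Xf e y < Xf e' y" using SW[OF e e' _ r1(1,2) r2(1,2) nv] by auto
      then show ?thesis using r1 r2 by auto
    next
      assume "rk e' < rk e" then have "Xf e' y < Xf e y" using SW[OF e' e _ r2(1,2) r1(1,2) nv] by auto
      then show ?thesis using r1 r2 by auto
    qed
  next
    case True
    then obtain w where w: "intv w" "real (Hn w) = y" by auto
    obtain c0 where c0: "c0 \<in> Ov w" "Pn w = rk c0" using int_data[OF w(1)] by metis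
    have c0E: "c0 \<in> E" "src c0 = w" using c0 O_mem by auto
    note A1 = AT_W[OF w(1) e, unfolded w(2), OF r1(1,2)]
    note A2 = AT_W[OF w(1) e', unfolded w(2), OF r2(1,2)]
    have notinc: False if "src f \<noteq> w" "tgt f \<noteq> w" "f \<in> E" "rk f = rk c0" for f
      using rk_inj[OF that(3) c0E(1) that(4)] that c0E by auto
    show ?thesis
    proof (cases "src e = w \<or> tgt e = w")
      case i1: True
      show ?thesis
      proof (cases "src e' = w \<or> tgt e' = w")
        case True
        have "p = ps w" using A1 i1 r1 y_def w c0 unfolding ps_def by (auto simp: prod_eq_iff)
        then show ?thesis using i1 True by auto
      next
        case False
        then show ?thesis using A1 A2 i1 r1 r2 c0 notinc[OF _ _ e'] by auto
      qed
    next
      case False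
      then have X1: "Xf e y = real (rk e)" using A1 by auto
      show ?thesis
      proof (cases "src e' = w \<or> tgt e' = w")
        case True
        then show ?thesis using A2 X1 r1 r2 c0 notinc[OF _ _ e] False by auto
      next
        case False
        then show ?thesis using A2 X1 r1 r2 rne by auto
      qed
    qed
  qed
qed

lemma vertex_on_edge:
  assumes v: "v \<in> V" and e: "e \<in> E" and p: "ps v \<in> path_image (gm e)"
  shows "v = src e \<or> v = tgt e"
proof -
  have r: "real (Hn (tgt e)) \<le> real (Hn v)" "real (Hn v) \<le> real (Hn (src e))" "real (Pn v) = Xf e (real (Hn v))"
    using pi_gm[OF e, of "ps v"] p unfolding ps_def by auto
  show ?thesis
  proof (cases "intv v")
    case True
    obtain c0 where c0: "c0 \<in> Ov v" "Pn v = rk c0" using int_data[OF True] by metis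
    have c0E: "c0 \<in> E" "src c0 = v" using c0 O_mem by auto
    note A = AT_W[OF True e r(1,2)]
    show ?thesis
    proof (rule ccontr)
      assume n: "\<not> (v = src e \<or> v = tgt e)"
      then have "rk e = rk c0" using A r(3) c0 by auto
      then have "e = c0" using rk_inj e c0E by metis
      then show False using n c0E by auto
    qed
  next
    case False
    then have "Iv v = {} \<or> Ov v = {}" using intv_iff v by auto
    then show ?thesis
    proof
      assume "Iv v = {}"
      then obtain ev where ev: "ev \<in> E" "src ev = v" "Hn v = card E + 1" "Pn v = rk ev"
        using src_vertex[OF v] by metis
      have "Hn (src e) = card E + 1" using r(2) ev Hn_le[of "src e"] by linarith
      then have "\<not> intv (src e)" using int_H by fastforce
      then have "Pn (src e) = rk e" using src_nonint e by auto
      moreover have "Xf e (real (Hn v)) = real (Pn (src e))"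
        using X_start[OF e] ev \<open>Hn (src e) = card E + 1\<close> by auto
      ultimately have "rk ev = rk e" using r(3) ev by auto
      then show ?thesis using rk_inj ev e by metis
    next
      assume "Ov v = {}"
      then obtain ev where ev: "ev \<in> E" "tgt ev = v" "Hn v = 0" "Pn v = rk ev"
        using snk_vertex[OF v] by metis
      have "Hn (tgt e) = 0" using r(1) ev by auto
      then have "\<not> intv (tgt e)" using int_H by fastforce
      then have "Pn (tgt e) = rk e" using tgt_nonint e by auto
      moreover have "Xf e (real (Hn v)) = real (Pn (tgt e))"
        using X_end[OF e] ev \<open>Hn (tgt e) = 0\<close> by auto
      ultimately have "rk ev = rk e" using r(3) ev by auto
      then show ?thesis using rk_inj ev e by metis
    qed
  qed
qed

lemma F1: "\<forall>e\<in>E. arc (gm e) \<and> pathstart (gm e) = ps (src e) \<and> pathfinish (gm e) = ps (tgt e)"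
proof
  fix e assume e: "e \<in> E"
  show "arc (gm e) \<and> pathstart (gm e) = ps (src e) \<and> pathfinish (gm e) = ps (tgt e)"
    using arc_gm[OF e] X_start[OF e] X_end[OF e]
    unfolding pathstart_def pathfinish_def gm_def ps_def Yf_def by auto
qed
lemma F2: "\<forall>e\<in>E. \<forall>e'\<in>E. e \<noteq> e' \<longrightarrow>
      path_image (gm e) \<inter> path_image (gm e') \<subseteq> ps ` ({src e, tgt e} \<inter> {src e', tgt e'})"
proof (intro ballI impI subsetI)
  fix e e' p assume "e \<in> E" "e' \<in> E" "e \<noteq> e'" "p \<in> path_image (gm e) \<inter> path_image (gm e')"
  then show "p \<in> ps ` ({src e, tgt e} \<inter> {src e', tgt e'})" using edges_disjoint[of e e' p] by simp
qed
lemma F3: "\<forall>v\<in>V. \<forall>e\<in>E. ps v \<in> path_image (gm e) \<longrightarrow> v = src e \<or> v = tgt e"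
  by (intro ballI impI) (rule vertex_on_edge)
lemma F4: "\<forall>v. is_source V E tgt v \<longrightarrow> snd (ps v) = real (card E) + 1 \<and> -1 \<le> fst (ps v) \<and> fst (ps v) \<le> real (card E)"
proof (intro allI impI)
  fix v assume a: "is_source V E tgt v"
  then have v: "v \<in> V" "Iv v = {}" unfolding is_source_def by auto
  have "Pn v < card E" using Pn_V v by auto
  obtain ev where "Hn v = card E + 1" using src_vertex[OF v] by metis
  then show "snd (ps v) = real (card E) + 1 \<and> -1 \<le> fst (ps v) \<and> fst (ps v) \<le> real (card E)"
    unfolding ps_def using \<open>Pn v < card E\<close> by auto
qed
lemma F5: "\<forall>v. is_sink V E src v \<longrightarrow> snd (ps v) = 0 \<and> -1 \<le> fst (ps v) \<and> fst (ps v) \<le> real (card E)"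
proof (intro allI impI)
  fix v assume a: "is_sink V E src v"
  then have v: "v \<in> V" "Ov v = {}" unfolding is_sink_def by auto
  have "Pn v < card E" using Pn_V v by auto
  obtain ev where "Hn v = 0" using snk_vertex[OF v] by metis
  then show "snd (ps v) = 0 \<and> -1 \<le> fst (ps v) \<and> fst (ps v) \<le> real (card E)"
    unfolding ps_def using \<open>Pn v < card E\<close> by auto
qed
lemma F6: "\<forall>v. intv v \<longrightarrow> -1 < fst (ps v) \<and> fst (ps v) < real (card E) \<and> 0 < snd (ps v) \<and> snd (ps v) < real (card E) + 1"
proof (intro allI impI)
  fix v assume a: "intv v"
  then have "v \<in> V" using intv_iff by auto
  then have "Pn v < card E" using Pn_V by auto
  moreover have "1 \<le> Hn v" "Hn v \<le> card E" using int_H a by auto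
  ultimately show "-1 < fst (ps v) \<and> fst (ps v) < real (card E) \<and> 0 < snd (ps v) \<and> snd (ps v) < real (card E) + 1"
    unfolding ps_def by auto
qed
lemma F7: "\<forall>e\<in>E. \<forall>t. 0 < t \<and> t < 1 \<longrightarrow> -1 < fst (gm e t) \<and> fst (gm e t) < real (card E) \<and> 0 < snd (gm e t) \<and> snd (gm e t) < real (card E) + 1"
proof (intro ballI allI impI)
  fix e and t :: real assume e: "e \<in> E" and t: "0 < t \<and> t < 1"
  have h: "real (Hn (src e)) - real (Hn (tgt e)) > 0" using H_edge_r[OF e] by auto
  define D where "D = real (Hn (src e)) - real (Hn (tgt e))"
  have D: "0 < D" using h D_def by auto
  have tD: "0 < t * D" "t * D < D" using D t mult_strict_right_mono[of t 1 D] by auto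
  have y1: "real (Hn (tgt e)) < Yf e t" "Yf e t < real (Hn (src e))"
    unfolding Yf_def using tD D_def by auto
  have "real (Hn (src e)) \<le> real (card E) + 1" using Hn_le[of "src e"] by simp
  moreover note X_range[OF e less_imp_le[OF y1(1)] less_imp_le[OF y1(2)]]
  ultimately show "-1 < fst (gm e t) \<and> fst (gm e t) < real (card E) \<and> 0 < snd (gm e t) \<and> snd (gm e t) < real (card E) + 1"
    using y1 unfolding gm_def by auto
qed
lemma F8: "\<forall>e\<in>E. \<forall>s t. 0 \<le> s \<and> s < t \<and> t \<le> 1 \<longrightarrow> snd (gm e t) < snd (gm e s)"
proof (intro ballI allI impI)
  fix e and s t :: real assume e: "e \<in> E" and st: "0 \<le> s \<and> s < t \<and> t \<le> 1"
  have h: "real (Hn (src e)) - real (Hn (tgt e)) > 0" using H_edge_r[OF e] by auto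
  have "s * (real (Hn (src e)) - real (Hn (tgt e))) < t * (real (Hn (src e)) - real (Hn (tgt e)))"
    using h st by (intro mult_strict_right_mono) auto
  then show "snd (gm e t) < snd (gm e s)" unfolding gm_def Yf_def by simp
qed
lemma F0: "-1 < real (card E)" "(0::real) < real (card E) + 1" by auto

lemma upward: "upward_BP_embedding V E src tgt ps gm (-1) (real (card E)) 0 (real (card E) + 1)"
  unfolding upward_BP_embedding_def BP_embedding_def
  by (intro conjI F0 ps_inj F1 F2 F3 F4 F5 F6 F7 F8)

end


lemma cut_segs_pre: "set p \<inter> Z = {} \<Longrightarrow> cut_segs Z (p @ L) = (p @ fst (cut_segs Z L), snd (cut_segs Z L))"
  by (induction p) (auto simp: Let_def split: prod.splits)

lemma cut_segs_x: "x \<in> Z \<Longrightarrow> cut_segs Z (x # L) = ([], (x, fst (cut_segs Z L)) # snd (cut_segs Z L))"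
  by (auto simp: Let_def split: prod.splits)

lemma cut_segs_hd: "L = [] \<or> hd L \<in> Z \<Longrightarrow> fst (cut_segs Z L) = []"
  by (cases L) (auto simp: Let_def split: prod.splits)

lemma compose_nil: "compose_order Z [] [] = []"
  unfolding compose_order_def by simp

lemma compose_rec:
  assumes "set q0 \<inter> Z = {}" "set p0 \<inter> Z = {}" "set p1 \<inter> Z = {}" "x \<in> Z" "L2 = [] \<or> hd L2 \<in> Z"
  shows "compose_order Z (q0 @ x # C2) (p0 @ x # p1 @ L2) = q0 @ x # p1 @ compose_order Z C2 L2"
proof -
  obtain s1 rc where c1: "cut_segs Z C2 = (s1, rc)" by force
  obtain p0' rl where c2: "cut_segs Z L2 = (p0', rl)" by force
  have p0': "p0' = []" using cut_segs_hd[OF assms(5)] c2 by auto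
  have A: "cut_segs Z (q0 @ x # C2) = (q0, (x, s1) # rc)"
    using cut_segs_pre[OF assms(1)] cut_segs_x[OF assms(4)] c1 assms(4) by simp
  have B: "cut_segs Z (p0 @ x # p1 @ L2) = (p0, (x, p1) # rl)"
    using cut_segs_pre[OF assms(2)] cut_segs_x[OF assms(4)] cut_segs_pre[OF assms(3)] c2 p0' assms(4) by simp
  show ?thesis
  proof (cases rc)
    case Nil
    then show ?thesis unfolding compose_order_def A B c1 c2 by simp
  next
    case (Cons r rs)
    then show ?thesis unfolding compose_order_def A B c1 c2 by simp
  qed
qed

context PG begin

definition sl :: "'e set \<Rightarrow> 'e list" where
  "sl S = (THE L. distinct L \<and> set L = S \<and> sorted_wrt lt L)"

lemma sorted_unique:
  "distinct L1 \<Longrightarrow> distinct L2 \<Longrightarrow> set L1 = set L2 \<Longrightarrow> sorted_wrt lt L1 \<Longrightarrow> sorted_wrt lt L2 \<Longrightarrow> L1 = L2"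
proof (induction L1 arbitrary: L2)
  case Nil then show ?case by simp
next
  case (Cons x xs)
  then obtain y ys where L2: "L2 = y # ys" by (cases L2) auto
  have "x = y"
  proof (rule ccontr)
    assume "x \<noteq> y"
    then have "y \<in> set xs" "x \<in> set ys" using Cons.prems L2 by (auto simp: set_eq_iff)
    then have "lt x y" "lt y x" using Cons.prems L2 by auto
    then show False using prec_trans prec_irr by blast
  qed
  moreover have "set xs = set ys" using Cons.prems L2 \<open>x = y\<close> by auto
  ultimately show ?case using Cons L2 by auto
qed

lemma sorted_from_rk: "sorted (map rk L) \<Longrightarrow> distinct L \<Longrightarrow> set L \<subseteq> E \<Longrightarrow> sorted_wrt lt L"
proof (induction L)
  case Nil then show ?case by simp
next
  case (Cons x xs)
  have "lt x y" if "y \<in> set xs" for y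
  proof -
    have "rk x \<le> rk y" "x \<noteq> y" using Cons.prems that by auto
    moreover have "x \<in> E" "y \<in> E" using Cons.prems that by auto
    ultimately have "rk x < rk y" using rk_inj by (metis le_neq_implies_less)
    then show ?thesis using rk_less \<open>x \<in> E\<close> \<open>y \<in> E\<close> by auto
  qed
  then show ?case using Cons by auto
qed

lemma sl_ex: assumes "finite S" "S \<subseteq> E" shows "\<exists>L. distinct L \<and> set L = S \<and> sorted_wrt lt L"
proof -
  obtain L0 where L0: "set L0 = S" "distinct L0" using finite_distinct_list[OF assms(1)] by auto
  define L where "L = sort_key rk L0"
  have "set L = S" "distinct L" "sorted (map rk L)" using L0 unfolding L_def by auto
  then show ?thesis using sorted_from_rk assms by blast
qed

lemma sl_props: assumes "finite S" "S \<subseteq> E"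
  shows "distinct (sl S)" "set (sl S) = S" "sorted_wrt lt (sl S)"
proof -
  have "\<exists>!L. distinct L \<and> set L = S \<and> sorted_wrt lt L"
    using sl_ex[OF assms] sorted_unique by blast
  then have "distinct (sl S) \<and> set (sl S) = S \<and> sorted_wrt lt (sl S)"
    unfolding sl_def by (rule theI')
  then show "distinct (sl S)" "set (sl S) = S" "sorted_wrt lt (sl S)" by auto
qed

lemma sl_eq: assumes "distinct L" "set L \<subseteq> E" "sorted_wrt lt L" shows "sl (set L) = L"
  using sl_props[of "set L"] assms sorted_unique by auto

lemma sl_empty: "sl {} = []"
  using sl_eq[of "[]"] by simp

lemma sl_single: "x \<in> E \<Longrightarrow> sl {x} = [x]"
  using sl_eq[of "[x]"] by simp

lemma sl_append: assumes "finite S1" "finite S2" "S1 \<subseteq> E" "S2 \<subseteq> E" "\<And>a b. a \<in> S1 \<Longrightarrow> b \<in> S2 \<Longrightarrow> lt a b"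
  shows "sl (S1 \<union> S2) = sl S1 @ sl S2"
proof -
  note p1 = sl_props[OF assms(1,3)] and p2 = sl_props[OF assms(2,4)]
  have d: "S1 \<inter> S2 = {}" using assms(5) prec_irr by blast
  have "sl (set (sl S1 @ sl S2)) = sl S1 @ sl S2"
    using p1 p2 d assms by (intro sl_eq) (auto simp: sorted_wrt_append)
  then show ?thesis using p1 p2 by simp
qed

lemma sorted_hd: "sorted_wrt lt (h # t) \<Longrightarrow> y \<in> set t \<Longrightarrow> lt h y" by auto

lemma list_order_sl: "list_order (sl E) = prec"
proof -
  note p = sl_props[OF finE order_refl]
  show ?thesis
  proof
    show "list_order (sl E) \<subseteq> prec"
      using p(3) unfolding list_order_def sorted_wrt_iff_nth_less by auto
  next
    show "prec \<subseteq> list_order (sl E)"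
    proof
      fix z assume z: "z \<in> prec"
      then obtain a b where ab: "z = (a, b)" "lt a b" by (cases z) auto
      then have "a \<in> set (sl E)" "b \<in> set (sl E)" using precE p by auto
      then obtain i k where ik: "i < length (sl E)" "k < length (sl E)" "sl E ! i = a" "sl E ! k = b"
        by (metis in_set_conv_nth)
      have "i \<noteq> k" using ik ab prec_irr by auto
      moreover have "\<not> k < i"
      proof
        assume "k < i"
        then have "lt b a" using p(3) ik unfolding sorted_wrt_iff_nth_less by auto
        then show False using ab prec_trans prec_irr by blast
      qed
      ultimately have "i < k" by auto
      then show "z \<in> list_order (sl E)" unfolding list_order_def using ik ab by auto
    qed
  qed
qed


lemma lt_total': "a \<in> E \<Longrightarrow> b \<in> E \<Longrightarrow> \<not> lt a b \<Longrightarrow> a \<noteq> b \<Longrightarrow> lt b a"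
  using prec_total by blast

lemma sl_hd_in:
  assumes "finite S" "S \<subseteq> E" "S \<noteq> {}" "\<And>y. y \<in> S \<Longrightarrow> \<exists>u\<in>S \<inter> X. lt u y \<or> u = y"
  shows "hd (sl S) \<in> X"
proof -
  note p = sl_props[OF assms(1,2)]
  obtain h t where ht: "sl S = h # t" using p(2) assms(3) by (cases "sl S") auto
  have hS: "h \<in> S" using p(2) ht by auto
  then obtain u where u: "u \<in> S \<inter> X" "lt u h \<or> u = h" using assms(4) by blast
  have "u = h"
  proof (rule ccontr)
    assume "u \<noteq> h"
    then have "u \<in> set t" using u p(2) ht by auto
    then have "lt h u" using p(3) ht by auto
    moreover have "lt u h" using u \<open>u \<noteq> h\<close> by auto
    ultimately show False using prec_trans[of h u h] prec_irr by auto
  qed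
  then show ?thesis using u ht by auto
qed

lemma COMP:
  assumes "finite A" "finite B" "A \<subseteq> E" "B \<subseteq> E"
    "A \<inter> Z \<subseteq> B" "B \<inter> Z \<subseteq> A" "A \<inter> B \<subseteq> Z"
    "\<forall>a\<in>A - B. \<exists>u\<in>A \<inter> B. lt a u"
    "\<forall>b\<in>B - A. \<exists>u\<in>A \<inter> B. lt u b"
    "\<forall>q\<in>A - B. \<forall>p\<in>B - A. lt q p \<longrightarrow> (\<exists>u\<in>A \<inter> B. lt q u \<and> lt u p)"
  shows "compose_order Z (sl A) (sl B) = sl (A \<union> B)"
  using assms
proof (induction "card (A \<inter> B)" arbitrary: A B rule: less_induct)
  case less
  note fA = less.prems(1) and fB = less.prems(2) and AE = less.prems(3) and BE = less.prems(4)
    and AZ = less.prems(5) and BZ = less.prems(6) and ABZ = less.prems(7)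
    and R1 = less.prems(8) and R2 = less.prems(9) and R3 = less.prems(10)
  define X where "X = A \<inter> B"
  show ?case
  proof (cases "X = {}")
    case True
    then have "A = {}" "B = {}" using R1 R2 X_def by auto
    then show ?thesis using compose_nil sl_empty by simp
  next
    case False
    have fX: "finite X" using fA X_def by auto
    have "Min (rk ` X) \<in> rk ` X" using False fX by (intro Min_in) auto
    then obtain x where x0: "x \<in> X" "rk x = Min (rk ` X)" by auto
    have x: "x \<in> X" "\<And>u. u \<in> X \<Longrightarrow> rk x \<le> rk u"
      using x0 fX by auto
    have xE: "x \<in> E" "x \<in> A" "x \<in> B" "x \<in> Z" using x X_def AE ABZ by auto
    have xmin: "lt x u" if "u \<in> X" "u \<noteq> x" for u
    proof -
      have "rk x \<le> rk u" using x that by auto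
      moreover have "u \<in> E" using that X_def AE by auto
      moreover have "rk x \<noteq> rk u" using rk_inj that xE \<open>u \<in> E\<close> by metis
      ultimately show ?thesis using rk_less xE by auto
    qed
    have notlt: "\<not> lt u x" if "u \<in> X" for u
    proof
      assume ux: "lt u x"
      show False
      proof (cases "u = x")
        case True then show False using ux prec_irr by auto
      next
        case False then show False using prec_trans[OF ux xmin[OF that False]] prec_irr by auto
      qed
    qed
    define X2 where "X2 = X - {x}"
    define A1 where "A1 = {a \<in> A. lt a x}"
    define A2 where "A2 = {a \<in> A. lt x a}"
    define B2 where "B2 = {b \<in> B. \<exists>u\<in>X2. lt u b \<or> u = b}"
    define P1 where "P1 = {b \<in> B. lt x b} - B2"
    have B2x: "lt x b" if bb: "b \<in> B2" for b
    proof -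
      obtain u where u: "u \<in> X2" "lt u b \<or> u = b" using bb B2_def by auto
      then have "lt x u" using xmin X2_def by auto
      then show ?thesis using u by (auto intro: prec_trans[of x u b])
    qed
    have Bnolt: "\<not> lt b x" if bb: "b \<in> B" for b
    proof
      assume bx: "lt b x"
      show False
      proof (cases "b \<in> A")
        case True then show False using notlt X_def that bx by auto
      next
        case False
        then obtain u where "u \<in> X" "lt u b" using R2 bb X_def by auto
        then show False using notlt[OF \<open>u \<in> X\<close>] prec_trans[OF \<open>lt u b\<close> bx] by auto
      qed
    qed
    have Adec: "A = A1 \<union> ({x} \<union> A2)"
    proof (rule set_eqI)
      fix a show "a \<in> A \<longleftrightarrow> a \<in> A1 \<union> ({x} \<union> A2)"
      proof
        assume a: "a \<in> A"
        then have "a = x \<or> lt a x \<or> lt x a" using prec_total[of a x] AE xE by blast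
        then show "a \<in> A1 \<union> ({x} \<union> A2)" using a A1_def A2_def by auto
      qed (auto simp: A1_def A2_def xE)
    qed
    have Bdec: "B = {x} \<union> (P1 \<union> B2)"
    proof -
      have bx: "b = x \<or> lt x b" if "b \<in> B" for b using that Bnolt[OF that] prec_total[of b x] BE xE by blast
      show ?thesis
      proof (rule set_eqI)
        fix b show "b \<in> B \<longleftrightarrow> b \<in> {x} \<union> (P1 \<union> B2)"
        proof
          assume b: "b \<in> B"
          show "b \<in> {x} \<union> (P1 \<union> B2)" using bx[OF b] b unfolding P1_def by auto
        qed (auto simp: P1_def B2_def xE)
      qed
    qed
    have sub: "A1 \<subseteq> E" "A2 \<subseteq> E" "B2 \<subseteq> E" "P1 \<subseteq> E"
      using AE BE unfolding A1_def A2_def B2_def P1_def by auto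
    have fin: "finite A1" "finite A2" "finite B2" "finite P1"
      using fA fB unfolding A1_def A2_def B2_def P1_def by auto
    have slA: "sl A = sl A1 @ x # sl A2"
    proof -
      have "sl A = sl A1 @ sl ({x} \<union> A2)"
      proof (subst Adec, rule sl_append)
        fix a b assume "a \<in> A1" "b \<in> {x} \<union> A2"
        then have "lt a x" "b = x \<or> lt x b" unfolding A1_def A2_def by auto
        then show "lt a b" using prec_trans by auto
      qed (use fin sub xE in auto)
      also have "sl ({x} \<union> A2) = sl {x} @ sl A2"
        by (rule sl_append) (use fin sub xE in \<open>simp_all add: A2_def\<close>)
      finally show ?thesis using sl_single xE by simp
    qed
    have P1B2: "lt p b" if pp: "p \<in> P1" and bb: "b \<in> B2" for p b
    proof -
      obtain u where u: "u \<in> X2" "lt u b \<or> u = b" using bb B2_def by auto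
      have "p \<noteq> b" using that P1_def by auto
      moreover have "\<not> lt b p"
      proof
        assume "lt b p"
        then have "lt u p \<or> u = p" using u by (auto intro: prec_trans[of u b p])
        then show False using that u P1_def B2_def by auto
      qed
      moreover have "b \<in> E" "p \<in> E" using sub that by auto
      ultimately show ?thesis using lt_total'[of b p] by auto
    qed
    have slB: "sl B = x # sl P1 @ sl B2"
    proof -
      have "sl B = sl {x} @ sl (P1 \<union> B2)"
      proof (subst Bdec, rule sl_append)
        fix a b assume "a \<in> {x}" "b \<in> P1 \<union> B2"
        then show "lt a b" using B2x unfolding P1_def by auto
      qed (use fin sub xE in auto)
      also have "sl (P1 \<union> B2) = sl P1 @ sl B2"
        by (rule sl_append) (use fin sub P1B2 in simp_all)
      finally show ?thesis using sl_single xE by simp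
    qed
    have d1: "set (sl A1) \<inter> Z = {}"
    proof -
      have "a \<notin> Z" if "a \<in> A1" for a
      proof
        assume "a \<in> Z" then have "a \<in> X" using that AZ X_def A1_def by auto
        then show False using notlt that A1_def by auto
      qed
      then show ?thesis using sl_props(2)[OF fin(1) sub(1)] by auto
    qed
    have d2: "set (sl P1) \<inter> Z = {}"
    proof -
      have "p \<notin> Z" if "p \<in> P1" for p
      proof
        assume "p \<in> Z" then have "p \<in> X" using that BZ X_def P1_def by auto
        moreover have "p \<noteq> x" using that P1_def prec_irr by auto
        ultimately have "p \<in> B2" using that X2_def B2_def P1_def by auto
        then show False using that P1_def by auto
      qed
      then show ?thesis using sl_props(2)[OF fin(4) sub(4)] by auto
    qed
    have X2eq: "A2 \<inter> B2 = X2"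
    proof
      show "A2 \<inter> B2 \<subseteq> X2" using A2_def B2_def X_def X2_def prec_irr by auto
      show "X2 \<subseteq> A2 \<inter> B2"
      proof
        fix u assume u: "u \<in> X2"
        then have "lt x u" using xmin X2_def by auto
        then show "u \<in> A2 \<inter> B2" using u X2_def X_def A2_def B2_def by auto
      qed
    qed
    have hd2: "sl B2 = [] \<or> hd (sl B2) \<in> Z"
    proof (cases "B2 = {}")
      case True then show ?thesis using sl_empty by simp
    next
      case False
      have "hd (sl B2) \<in> X2"
      proof (rule sl_hd_in[OF fin(3) sub(3) False])
        fix y assume "y \<in> B2"
        then obtain u where "u \<in> X2" "lt u y \<or> u = y" using B2_def by auto
        moreover then have "u \<in> B2" using X2eq by auto
        ultimately show "\<exists>u\<in>B2 \<inter> X2. lt u y \<or> u = y" by auto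
      qed
      then show ?thesis using X2_def X_def ABZ by auto
    qed
    have rec: "compose_order Z (sl A) (sl B) = sl A1 @ x # sl P1 @ compose_order Z (sl A2) (sl B2)"
      unfolding slA slB using compose_rec[OF d1, of "[]", OF _ d2 xE(4) hd2] by simp
    have AB2: "a \<in> A - B" if "a \<in> A2 - B2" for a
    proof -
      have "a \<notin> B"
      proof
        assume "a \<in> B"
        then have "a \<in> X2" using that A2_def X_def X2_def prec_irr by auto
        then show False using X2eq that by auto
      qed
      then show ?thesis using that A2_def by auto
    qed
    have BA2: "b \<in> B - A" if "b \<in> B2 - A2" for b
    proof -
      have "b \<notin> A" using B2x that A2_def by auto
      then show ?thesis using that B2_def by auto
    qed
    have IH: "compose_order Z (sl A2) (sl B2) = sl (A2 \<union> B2)"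
    proof (rule less.hyps)
      show "card (A2 \<inter> B2) < card (A \<inter> B)"
        unfolding X2eq X2_def X_def[symmetric] using x fX by (metis card_Diff1_less)
      show "finite A2" "finite B2" "A2 \<subseteq> E" "B2 \<subseteq> E" using fin sub by auto
      show "A2 \<inter> Z \<subseteq> B2"
      proof
        fix a assume a: "a \<in> A2 \<inter> Z"
        then have "a \<in> X" "a \<noteq> x" using AZ X_def A2_def prec_irr by auto
        then show "a \<in> B2" using X2eq X2_def by auto
      qed
      show "B2 \<inter> Z \<subseteq> A2" using BZ B2x A2_def B2_def by auto
      show "A2 \<inter> B2 \<subseteq> Z" using X2eq X2_def X_def ABZ by auto
      show "\<forall>a\<in>A2 - B2. \<exists>u\<in>A2 \<inter> B2. lt a u"
      proof
        fix a assume a: "a \<in> A2 - B2"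
        then obtain u where u: "u \<in> X" "lt a u" using R1 AB2 X_def by blast
        have "lt x a" using a A2_def by auto
        then have "lt x u" using u prec_trans[of x a u] by auto
        then have "u \<in> X2" using u X2_def prec_irr by auto
        then show "\<exists>u\<in>A2 \<inter> B2. lt a u" using u X2eq by auto
      qed
      show "\<forall>b\<in>B2 - A2. \<exists>u\<in>A2 \<inter> B2. lt u b"
      proof
        fix b assume b: "b \<in> B2 - A2"
        then obtain u where u: "u \<in> X2" "lt u b \<or> u = b" using B2_def by auto
        have "u \<noteq> b" using u b X2eq by auto
        then show "\<exists>u\<in>A2 \<inter> B2. lt u b" using u X2eq by auto
      qed
      show "\<forall>q\<in>A2 - B2. \<forall>p\<in>B2 - A2. lt q p \<longrightarrow> (\<exists>u\<in>A2 \<inter> B2. lt q u \<and> lt u p)"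
      proof (intro ballI impI)
        fix q p assume q: "q \<in> A2 - B2" and p: "p \<in> B2 - A2" and qp: "lt q p"
        then obtain u where u: "u \<in> X" "lt q u" "lt u p" using R3 AB2 BA2 X_def by blast
        have "lt x q" using q A2_def by auto
        then have "lt x u" using u prec_trans[of x q u] by auto
        then have "u \<in> X2" using u X2_def prec_irr by auto
        then show "\<exists>u\<in>A2 \<inter> B2. lt q u \<and> lt u p" using u X2eq by auto
      qed
    qed
    have P1A2: "lt p a" if "p \<in> P1" "a \<in> A2" for p a
    proof -
      have pB: "p \<in> B" "lt x p" "p \<notin> B2" using that P1_def by auto
      have aA: "a \<in> A" "lt x a" using that A2_def by auto
      have pX2: False if "p \<in> X" 
      proof -
        have "p \<in> X2" using that pB X2_def prec_irr by auto
        then show False using pB B2_def by auto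
      qed
      have "a \<noteq> p" using pX2 aA pB X_def by auto
      moreover have "\<not> lt a p"
      proof
        assume ap: "lt a p"
        show False
        proof (cases "a \<in> B")
          case True
          then have "a \<in> X2" using aA X_def X2_def prec_irr by auto
          then show False using ap pB B2_def by auto
        next
          case False
          have "p \<notin> A" using pX2 pB X_def by auto
          then obtain u where u: "u \<in> X" "lt a u" "lt u p" using R3 aA False pB ap X_def by blast
          have "lt x u" using u aA prec_trans[of x a u] by auto
          then have "u \<in> X2" using u prec_irr X2_def by auto
          then show False using u pB B2_def by auto
        qed
      qed
      moreover have "a \<in> E" "p \<in> E" using sub that by auto
      ultimately show ?thesis using lt_total'[of a p] by auto
    qed
    have fin2: "finite (A2 \<union> B2)" "A2 \<union> B2 \<subseteq> E" using fin sub by auto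
    have ABdec: "A \<union> B = A1 \<union> ({x} \<union> (P1 \<union> (A2 \<union> B2)))" using Adec Bdec by blast
    have "sl (A \<union> B) = sl A1 @ sl ({x} \<union> (P1 \<union> (A2 \<union> B2)))"
      unfolding ABdec
    proof (rule sl_append)
      show "finite A1" "A1 \<subseteq> E" using fin sub by auto
      show "finite ({x} \<union> (P1 \<union> (A2 \<union> B2)))" "{x} \<union> (P1 \<union> (A2 \<union> B2)) \<subseteq> E" using fin sub xE by auto
      fix a b assume a: "a \<in> A1" and b: "b \<in> {x} \<union> (P1 \<union> (A2 \<union> B2))"
      have "lt a x" using a A1_def by auto
      moreover have "b = x \<or> lt x b" using b P1_def A2_def B2x by auto
      ultimately show "lt a b" using prec_trans by auto
    qed
    also have "sl ({x} \<union> (P1 \<union> (A2 \<union> B2))) = sl {x} @ sl (P1 \<union> (A2 \<union> B2))"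
    proof (rule sl_append)
      show "finite {x}" "{x} \<subseteq> E" using xE by auto
      show "finite (P1 \<union> (A2 \<union> B2))" "P1 \<union> (A2 \<union> B2) \<subseteq> E" using fin sub by auto
      fix a b assume "a \<in> {x}" "b \<in> P1 \<union> (A2 \<union> B2)"
      then show "lt a b" using P1_def A2_def B2x by auto
    qed
    also have "sl (P1 \<union> (A2 \<union> B2)) = sl P1 @ sl (A2 \<union> B2)"
    proof (rule sl_append)
      show "finite P1" "P1 \<subseteq> E" "finite (A2 \<union> B2)" "A2 \<union> B2 \<subseteq> E" using fin sub by auto
      fix a b assume "a \<in> P1" "b \<in> A2 \<union> B2"
      then show "lt a b" using P1A2 P1B2 by auto
    qed
    finally show ?thesis using rec IH sl_single xE by simp
  qed
qed

end


lemma sorted_wrt_cong_d: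
  "distinct L \<Longrightarrow> (\<And>x y. x \<in> set L \<Longrightarrow> y \<in> set L \<Longrightarrow> x \<noteq> y \<Longrightarrow> P x y = Q x y) \<Longrightarrow> sorted_wrt P L = sorted_wrt Q L"
  by (induction L) auto

context PG begin

lemma snd_ps: "snd (ps v) = real (Hn v)" unfolding ps_def by simp

lemma SWiff:
  assumes "e1 \<in> E" "e2 \<in> E" "e1 \<noteq> e2"
    "real (Hn (tgt e1)) \<le> y" "y \<le> real (Hn (src e1))"
    "real (Hn (tgt e2)) \<le> y" "y \<le> real (Hn (src e2))"
    "\<And>w. intv w \<Longrightarrow> real (Hn w) \<noteq> y"
  shows "Xf e1 y < Xf e2 y \<longleftrightarrow> rk e1 < rk e2"
proof -
  have "rk e1 \<noteq> rk e2" using rk_inj assms by metis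
  then have "rk e1 < rk e2 \<or> rk e2 < rk e1" by auto
  then show ?thesis
  proof
    assume "rk e1 < rk e2" then show ?thesis using SW[of e1 e2 y] assms by auto
  next
    assume "rk e2 < rk e1" then show ?thesis using SW[of e2 e1 y] assms by auto
  qed
qed

end

locale CUT = PG +
  fixes n :: nat and ys :: "nat \<Rightarrow> real"
  assumes vc: "valid_cut V E src tgt ps 0 (real (card E) + 1) n ys"
begin

lemma vcu: "1 \<le> n \<and> ys 0 = real (card E) + 1 \<and> ys n = 0 \<and> (\<forall>j<n. ys (Suc j) < ys j) \<and>
     (\<forall>j. 0 < j \<and> j < n \<longrightarrow> (\<forall>v\<in>V. real (Hn v) \<noteq> ys j)) \<and>
     (\<forall>j\<in>{1..n}. \<forall>v w. intv v \<and> intv w \<and>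
         ys j < real (Hn v) \<and> real (Hn v) < ys (j - 1) \<and>
         ys j < real (Hn w) \<and> real (Hn w) < ys (j - 1) \<longrightarrow> v = w)"
  using vc unfolding valid_cut_def snd_ps .

lemma n1: "1 \<le> n" and ys0: "ys 0 = real (card E) + 1" and ysn: "ys n = 0"
  using vcu by simp_all

lemma ysS: "j < n \<Longrightarrow> ys (Suc j) < ys j" using vcu by simp

lemma ysV: "0 < j \<Longrightarrow> j < n \<Longrightarrow> v \<in> V \<Longrightarrow> real (Hn v) \<noteq> ys j"
proof -
  assume "0 < j" "j < n" "v \<in> V"
  moreover have "\<forall>j. 0 < j \<and> j < n \<longrightarrow> (\<forall>v\<in>V. real (Hn v) \<noteq> ys j)" using vcu by simp
  ultimately show ?thesis by blast
qed

lemma ysU: "j \<in> {1..n} \<Longrightarrow> intv v \<Longrightarrow> intv w \<Longrightarrow> ys j < real (Hn v) \<Longrightarrow> real (Hn v) < ys (j - 1)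
      \<Longrightarrow> ys j < real (Hn w) \<Longrightarrow> real (Hn w) < ys (j - 1) \<Longrightarrow> v = w"
proof -
  have "\<forall>j\<in>{1..n}. \<forall>v w. intv v \<and> intv w \<and>
         ys j < real (Hn v) \<and> real (Hn v) < ys (j - 1) \<and>
         ys j < real (Hn w) \<and> real (Hn w) < ys (j - 1) \<longrightarrow> v = w" using vcu by simp
  then show "j \<in> {1..n} \<Longrightarrow> intv v \<Longrightarrow> intv w \<Longrightarrow> ys j < real (Hn v) \<Longrightarrow> real (Hn v) < ys (j - 1)
      \<Longrightarrow> ys j < real (Hn w) \<Longrightarrow> real (Hn w) < ys (j - 1) \<Longrightarrow> v = w" by blast
qed

lemma ys_mono: "j < k \<Longrightarrow> k \<le> n \<Longrightarrow> ys k < ys j"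
proof (induction k)
  case 0 then show ?case by simp
next
  case (Suc k)
  then show ?case using ysS[of k] by (cases "j = k") auto
qed


lemma ys_bounds: assumes "j \<le> n" shows "0 \<le> ys j" "ys j \<le> real (card E) + 1"
proof -
  show "0 \<le> ys j" using ys_mono[of j n] ysn assms by (cases "j = n") auto
  show "ys j \<le> real (card E) + 1" using ys_mono[of 0 j] ys0 assms by (cases "j = 0") auto
qed

lemma ys_notint: assumes "j \<le> n" "intv w" shows "real (Hn w) \<noteq> ys j"
proof -
  have h: "1 \<le> Hn w" "Hn w \<le> card E" using int_H assms by auto
  have "w \<in> V" using assms intv_iff by auto
  show ?thesis
  proof (cases "j = 0")
    case True then show ?thesis using ys0 h by auto
  next
    case False
    show ?thesis
    proof (cases "j = n")
      case True then show ?thesis using ysn h by auto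
    next
      case False
      then show ?thesis using ysV[of j w] \<open>j \<noteq> 0\<close> assms \<open>w \<in> V\<close> by auto
    qed
  qed
qed

abbreviation "S j \<equiv> strip_edges E src tgt ps ys j"
abbreviation "SV j v \<equiv> strip_vertex V E src tgt ps ys j v"

lemma S_mem: "e \<in> S j \<longleftrightarrow> e \<in> E \<and> real (Hn (tgt e)) < ys (j - 1) \<and> ys j < real (Hn (src e))"
  unfolding strip_edges_def snd_ps by auto

lemma SV_iff: "SV j v \<longleftrightarrow> intv v \<and> ys j < real (Hn v) \<and> real (Hn v) < ys (j - 1)"
  unfolding strip_vertex_def snd_ps by auto

lemma SV_unique: "j \<in> {1..n} \<Longrightarrow> SV j v \<Longrightarrow> SV j w \<Longrightarrow> v = w"
  unfolding SV_iff by (rule ysU) auto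

lemma top_ok:
  assumes j: "j \<in> {1..n}" and e: "e \<in> S j" and ns: "\<not> SV j (src e)"
  shows "ys (j - 1) \<le> real (Hn (src e))"
proof (rule ccontr)
  assume a: "\<not> ys (j - 1) \<le> real (Hn (src e))"
  have eE: "e \<in> E" and b: "ys j < real (Hn (src e))" using e S_mem by auto
  show False
  proof (cases "intv (src e)")
    case True then show False using ns a b SV_iff by auto
  next
    case False
    then have "Hn (src e) = card E + 1" using src_nonint eE by auto
    moreover have "ys (j - 1) \<le> real (card E) + 1" using ys_bounds j by auto
    ultimately show False using a by auto
  qed
qed

lemma bot_ok:
  assumes j: "j \<in> {1..n}" and e: "e \<in> S j" and ns: "\<not> SV j (tgt e)"
  shows "real (Hn (tgt e)) \<le> ys j"
proof (rule ccontr)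
  assume a: "\<not> real (Hn (tgt e)) \<le> ys j"
  have eE: "e \<in> E" and b: "real (Hn (tgt e)) < ys (j - 1)" using e S_mem by auto
  show False
  proof (cases "intv (tgt e)")
    case True then show False using ns a b SV_iff by auto
  next
    case False
    then have "Hn (tgt e) = 0" using tgt_nonint eE by auto
    moreover have "0 \<le> ys j" using ys_bounds j by auto
    ultimately show False using a by auto
  qed
qed


abbreviation "INS j e \<equiv> in_star V E src tgt ps ys j e"
abbreviation "CK j e \<equiv> comp_key V E src tgt ps gm ys j e"

lemma present_T:
  assumes j: "j \<in> {1..n}" and e: "e \<in> S j" and ns: "\<not> SV j (src e)"
  shows "xcross gm e (ys (j - 1)) = Xf e (ys (j - 1))"
    "real (Hn (tgt e)) \<le> ys (j - 1)" "ys (j - 1) \<le> real (Hn (src e))"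
proof -
  have "e \<in> E" "real (Hn (tgt e)) < ys (j - 1)" using e S_mem by auto
  moreover have "ys (j - 1) \<le> real (Hn (src e))" using top_ok[OF j e ns] .
  ultimately show "xcross gm e (ys (j - 1)) = Xf e (ys (j - 1))"
    "real (Hn (tgt e)) \<le> ys (j - 1)" "ys (j - 1) \<le> real (Hn (src e))"
    using xcross_gm by auto
qed

lemma present_B:
  assumes j: "j \<in> {1..n}" and e: "e \<in> S j" and ns: "\<not> SV j (tgt e)"
  shows "xcross gm e (ys j) = Xf e (ys j)"
    "real (Hn (tgt e)) \<le> ys j" "ys j \<le> real (Hn (src e))"
proof -
  have "e \<in> E" "ys j < real (Hn (src e))" using e S_mem by auto
  moreover have "real (Hn (tgt e)) \<le> ys j" using bot_ok[OF j e ns] .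
  ultimately show "xcross gm e (ys j) = Xf e (ys j)"
    "real (Hn (tgt e)) \<le> ys j" "ys j \<le> real (Hn (src e))"
    using xcross_gm by auto
qed

lemma canon_nosv:
  assumes j: "j \<in> {1..n}" and e: "e \<in> S j" and e': "e' \<in> S j" and ne: "e \<noteq> e'"
    and nsv: "\<And>v. \<not> SV j v"
  shows "canon_less V E src tgt ps gm ys j e e' \<longleftrightarrow> lt e e'"
proof -
  have ni: "\<not> INS j f" for f using nsv unfolding in_star_def by auto
  have ck: "CK j f = xcross gm f (ys (j - 1))" for f unfolding comp_key_def using ni by simp
  have eE: "e \<in> E" "e' \<in> E" using e e' S_mem by auto
  note pe = present_T[OF j e nsv] and pe' = present_T[OF j e' nsv]
  have nv: "\<And>w. intv w \<Longrightarrow> real (Hn w) \<noteq> ys (j - 1)" using ys_notint j by auto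
  have "canon_less V E src tgt ps gm ys j e e' \<longleftrightarrow> Xf e (ys (j - 1)) < Xf e' (ys (j - 1))"
    unfolding canon_less_def ck using ni e e' pe(1) pe'(1) by simp
  also have "\<dots> \<longleftrightarrow> rk e < rk e'" using SWiff[OF eE ne pe(2,3) pe'(2,3) nv] .
  also have "\<dots> \<longleftrightarrow> lt e e'" using rk_less eE by auto
  finally show ?thesis .
qed

lemma canon_sv:
  assumes j: "j \<in> {1..n}" and e: "e \<in> S j" and e': "e' \<in> S j" and ne: "e \<noteq> e'"
    and sv: "SV j v"
  shows "canon_less V E src tgt ps gm ys j e e' \<longleftrightarrow> lt e e'"
proof -
  define T where "T = ys (j - 1)"
  define Bo where "Bo = ys j"
  have vi: "intv v" "Bo < real (Hn v)" "real (Hn v) < T" using sv unfolding SV_iff T_def Bo_def by auto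
  have the_v: "(THE v. SV j v) = v"
    by (rule the_equality[where P = "SV j", OF sv]) (rule SV_unique[OF j _ sv])
  have ins: "INS j f \<longleftrightarrow> src f = v \<or> tgt f = v" for f
  proof
    assume "INS j f"
    then obtain v' where "SV j v'" "src f = v' \<or> tgt f = v'" unfolding in_star_def by auto
    moreover then have "v' = v" using SV_unique[OF j _ sv] by auto
    ultimately show "src f = v \<or> tgt f = v" by auto
  next
    assume "src f = v \<or> tgt f = v"
    then show "INS j f" unfolding in_star_def using sv by auto
  qed
  have jn: "j - 1 \<le> n" "j \<le> n" using j by auto
  have nvT: "\<And>w. intv w \<Longrightarrow> real (Hn w) \<noteq> T" using ys_notint[OF jn(1)] unfolding T_def by auto
  have nvB: "\<And>w. intv w \<Longrightarrow> real (Hn w) \<noteq> Bo" using ys_notint[OF jn(2)] unfolding Bo_def by auto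
  have eE: "e \<in> E" "e' \<in> E" using e e' S_mem by auto
  have inS: "a \<in> S j" if "a \<in> Iv v" for a
  proof -
    have a: "a \<in> E" "tgt a = v" using that I_mem by auto
    then show ?thesis using H_edge_r[of a] vi S_mem T_def Bo_def by auto
  qed
  have nsv_src_in: "\<not> SV j (src a)" if "a \<in> Iv v" for a
  proof
    assume "SV j (src a)"
    then have "src a = v" using SV_unique[OF j sv] by auto
    moreover have "a \<in> E" "tgt a = v" using that I_mem by auto
    ultimately show False using noloop[of a] by auto
  qed
  have nsv_tgt_out: "\<not> SV j (tgt a)" if "a \<in> E" "src a = v" for a
  proof
    assume "SV j (tgt a)"
    then have "tgt a = v" using SV_unique[OF j sv] by auto
    then show False using that noloop[of a] by auto
  qed
  have nsv_ni: "\<not> SV j (src f) \<and> \<not> SV j (tgt f)" if "src f \<noteq> v" "tgt f \<noteq> v" for f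
  proof
    show "\<not> SV j (src f)" using SV_unique[OF j _ sv, of "src f"] that by auto
    show "\<not> SV j (tgt f)" using SV_unique[OF j _ sv, of "tgt f"] that by auto
  qed
  define K where "K = Min ((\<lambda>a. Xf a T) ` Iv v)"
  have Kimg: "(\<lambda>a. xcross gm a T) ` Iv v = (\<lambda>a. Xf a T) ` Iv v"
    using present_T(1)[OF j inS nsv_src_in] T_def by (intro image_cong) auto
  have ck: "CK j f = (if src f = v \<or> tgt f = v then K else xcross gm f T)" for f
  proof -
    have Kx: "Min ((\<lambda>a. xcross gm a (ys (j - 1))) ` Iv v) = K" using Kimg unfolding K_def T_def by simp
    show ?thesis unfolding comp_key_def Let_def the_v ins Kx T_def by simp
  qed
  have Ine: "Iv v \<noteq> {}" using vi intv_iff by auto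
  have finIm: "finite ((\<lambda>a. Xf a T) ` Iv v)" using finI by auto
  have NI: "Xf f T = xcross gm f T \<and> real (Hn (tgt f)) \<le> T \<and> T \<le> real (Hn (src f))
     \<and> Hn (tgt f) < Hn v \<and> Hn v < Hn (src f)"
    if f: "f \<in> S j" "src f \<noteq> v" "tgt f \<noteq> v" for f
  proof -
    note pT = present_T[OF j f(1) conjunct1[OF nsv_ni[OF f(2,3)]], folded T_def]
    note pB = present_B[OF j f(1) conjunct2[OF nsv_ni[OF f(2,3)]], folded Bo_def]
    have "real (Hn (tgt f)) < real (Hn v)" "real (Hn v) < real (Hn (src f))" using pT pB vi by auto
    then show ?thesis using pT by auto
  qed
  have K1: "K < Xf f T \<longleftrightarrow> rk g < rk f"
    if f: "f \<in> S j" "src f \<noteq> v" "tgt f \<noteq> v" and g: "g \<in> E" "src g = v \<or> tgt g = v" for f g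
  proof -
    note nf = NI[OF f]
    have fE: "f \<in> E" using f S_mem by auto
    have "K < Xf f T \<longleftrightarrow> (\<exists>a\<in>Iv v. Xf a T < Xf f T)" unfolding K_def using Min_less_iff[OF finIm] Ine by auto
    also have "\<dots> \<longleftrightarrow> (\<exists>a\<in>Iv v. rk a < rk f)"
    proof (intro bex_cong refl)
      fix a assume a: "a \<in> Iv v"
      have aE: "a \<in> E" "a \<noteq> f" using a I_mem f by auto
      note pa = present_T[OF j inS[OF a] nsv_src_in[OF a], folded T_def]
      show "Xf a T < Xf f T \<longleftrightarrow> rk a < rk f" using SWiff[OF aE(1) fE aE(2) pa(2,3) _ _ nvT] nf by auto
    qed
    also have "\<dots> \<longleftrightarrow> rk g < rk f"
    proof -
      have "rk a < rk f \<longleftrightarrow> rk g < rk f" if "a \<in> Iv v" for a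
        using SIDE[OF vi(1) fE _ _ _ _ g] nf that I_mem by auto
      then show ?thesis using Ine by auto
    qed
    finally show ?thesis .
  qed
  have K2: "Xf f T < K \<longleftrightarrow> rk f < rk g"
    if f: "f \<in> S j" "src f \<noteq> v" "tgt f \<noteq> v" and g: "g \<in> E" "src g = v \<or> tgt g = v" for f g
  proof -
    note nf = NI[OF f]
    have fE: "f \<in> E" using f S_mem by auto
    have "Xf f T < K \<longleftrightarrow> (\<forall>a\<in>Iv v. Xf f T < Xf a T)" unfolding K_def using Min_gr_iff[OF finIm] Ine by auto
    also have "\<dots> \<longleftrightarrow> (\<forall>a\<in>Iv v. rk f < rk a)"
    proof (intro ball_cong refl)
      fix a assume a: "a \<in> Iv v"
      have aE: "a \<in> E" "f \<noteq> a" using a I_mem f by auto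
      note pa = present_T[OF j inS[OF a] nsv_src_in[OF a], folded T_def]
      show "Xf f T < Xf a T \<longleftrightarrow> rk f < rk a" using SWiff[OF fE aE(1) aE(2) _ _ pa(2,3) nvT] nf by auto
    qed
    also have "\<dots> \<longleftrightarrow> rk f < rk g"
    proof -
      have ne: "rk f \<noteq> rk h" if "h \<in> E" "src h = v \<or> tgt h = v" for h
        using rk_inj[OF fE that(1)] that f by auto
      have "rk a < rk f \<longleftrightarrow> rk g < rk f" if "a \<in> Iv v" for a
        using SIDE[OF vi(1) fE _ _ _ _ g] nf that I_mem by auto
      moreover have "rk f \<noteq> rk a" if "a \<in> Iv v" for a using ne that I_mem by auto
      ultimately have "rk f < rk a \<longleftrightarrow> rk f < rk g" if "a \<in> Iv v" for a
        using that ne[OF g] by fastforce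
      then show ?thesis using Ine by auto
    qed
    finally show ?thesis .
  qed
  have cl: "canon_less V E src tgt ps gm ys j e e' \<longleftrightarrow> CK j e < CK j e' \<or>
      ((src e = v \<or> tgt e = v) \<and> (src e' = v \<or> tgt e' = v) \<and>
       ((tgt e = v \<and> src e' = v) \<or>
        (tgt e = v \<and> tgt e' = v \<and> xcross gm e T < xcross gm e' T) \<or>
        (src e = v \<and> src e' = v \<and> xcross gm e Bo < xcross gm e' Bo)))"
    unfolding canon_less_def Let_def the_v ins T_def Bo_def using e e' by simp
  have rkl: "lt e e' \<longleftrightarrow> rk e < rk e'" using rk_less eE by auto
  show ?thesis
  proof (cases "src e = v \<or> tgt e = v")
    case ie: True
    show ?thesis
    proof (cases "src e' = v \<or> tgt e' = v")
      case ie': True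
      have cke: "CK j e = K" "CK j e' = K" using ck ie ie' by auto
      show ?thesis
      proof (cases "tgt e = v")
        case te: True
        then have se: "src e \<noteq> v" using noloop eE by metis
        show ?thesis
        proof (cases "src e' = v")
          case True
          have "reach e e'" using reach_adj eE te True ne by auto
          then show ?thesis using cl cke te True P1 by auto
        next
          case False
          then have te': "tgt e' = v" using ie' by auto
          have e'in: "e' \<in> Iv v" "e \<in> Iv v" using te te' eE I_mem by auto
          note pa = present_T[OF j inS[OF e'in(2)] nsv_src_in[OF e'in(2)], folded T_def]
          note pb = present_T[OF j inS[OF e'in(1)] nsv_src_in[OF e'in(1)], folded T_def]
          have "canon_less V E src tgt ps gm ys j e e' \<longleftrightarrow> Xf e T < Xf e' T"
            using cl cke te te' False se pa(1) pb(1) by auto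
          also have "\<dots> \<longleftrightarrow> rk e < rk e'" using SWiff[OF eE ne pa(2,3) pb(2,3) nvT] .
          finally show ?thesis using rkl by simp
        qed
      next
        case tne: False
        then have se: "src e = v" using ie by auto
        show ?thesis
        proof (cases "tgt e' = v")
          case True
          have "reach e' e" using reach_adj eE True se ne by auto
          then have "lt e' e" using P1 by auto
          then have "\<not> lt e e'" using prec_trans prec_irr by blast
          moreover have "src e' \<noteq> v" using noloop eE True by metis
          ultimately show ?thesis using cl cke tne by auto
        next
          case False
          then have se': "src e' = v" using ie' by auto
          note pa = present_B[OF j e nsv_tgt_out[OF eE(1) se], folded Bo_def]
          note pb = present_B[OF j e' nsv_tgt_out[OF eE(2) se'], folded Bo_def]
          have "canon_less V E src tgt ps gm ys j e e' \<longleftrightarrow> Xf e Bo < Xf e' Bo"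
            using cl cke tne False se se' pa(1) pb(1) by auto
          also have "\<dots> \<longleftrightarrow> rk e < rk e'" using SWiff[OF eE ne pa(2,3) pb(2,3) nvB] .
          finally show ?thesis using rkl by simp
        qed
      qed
    next
      case False
      then have "CK j e = K" "CK j e' = xcross gm e' T" using ck ie by auto
      moreover have "xcross gm e' T = Xf e' T" using NI[OF e'] False by auto
      ultimately have "canon_less V E src tgt ps gm ys j e e' \<longleftrightarrow> K < Xf e' T" using cl False by auto
      also have "\<dots> \<longleftrightarrow> rk e < rk e'" using K1[OF e' _ _ eE(1) ie] False by auto
      finally show ?thesis using rkl by simp
    qed
  next
    case nie: False
    then have cke: "CK j e = xcross gm e T" using ck by auto
    have xe: "xcross gm e T = Xf e T" using NI[OF e] nie by auto
    show ?thesis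
    proof (cases "src e' = v \<or> tgt e' = v")
      case True
      then have "CK j e' = K" using ck by auto
      then have "canon_less V E src tgt ps gm ys j e e' \<longleftrightarrow> Xf e T < K" using cl nie cke xe by auto
      also have "\<dots> \<longleftrightarrow> rk e < rk e'" using K2[OF e _ _ eE(2) True] nie by auto
      finally show ?thesis using rkl by simp
    next
      case False
      then have "CK j e' = xcross gm e' T" using ck by auto
      moreover have "xcross gm e' T = Xf e' T" using NI[OF e'] False by auto
      ultimately have "canon_less V E src tgt ps gm ys j e e' \<longleftrightarrow> Xf e T < Xf e' T" using cl nie cke xe by auto
      also have "\<dots> \<longleftrightarrow> rk e < rk e'" using SWiff[OF eE ne _ _ _ _ nvT] NI[OF e] NI[OF e'] nie False by auto
      finally show ?thesis using rkl by simp
    qed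
  qed
qed


lemma canon_iff:
  assumes j: "j \<in> {1..n}" and e: "e \<in> S j" and e': "e' \<in> S j" and ne: "e \<noteq> e'"
  shows "canon_less V E src tgt ps gm ys j e e' \<longleftrightarrow> lt e e'"
proof (cases "\<exists>v. SV j v")
  case True
  then obtain v where "SV j v" by auto
  then show ?thesis using canon_sv[OF j e e' ne] by auto
next
  case False
  then show ?thesis using canon_nosv[OF j e e' ne] by auto
qed

lemma S_fin: "finite (S j)" "S j \<subseteq> E"
  using finE unfolding strip_edges_def by auto

lemma canon_list_eq: assumes j: "j \<in> {1..n}"
  shows "canon_list V E src tgt ps gm ys j = sl (S j)"
proof -
  have "(\<lambda>L. distinct L \<and> set L = S j \<and> sorted_wrt (canon_less V E src tgt ps gm ys j) L)
      = (\<lambda>L. distinct L \<and> set L = S j \<and> sorted_wrt lt L)"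
  proof (rule ext)
    fix L
    show "(distinct L \<and> set L = S j \<and> sorted_wrt (canon_less V E src tgt ps gm ys j) L)
      = (distinct L \<and> set L = S j \<and> sorted_wrt lt L)"
    proof (cases "distinct L \<and> set L = S j")
      case True
      then have "sorted_wrt (canon_less V E src tgt ps gm ys j) L = sorted_wrt lt L"
        using canon_iff[OF j] by (intro sorted_wrt_cong_d) auto
      then show ?thesis by auto
    qed auto
  qed
  then show ?thesis unfolding canon_list_def sl_def by simp
qed

definition Up where "Up j = {x \<in> E. ys j < real (Hn (src x))}"

lemma Ht_le: "e \<in> E \<Longrightarrow> Hn (tgt e) \<le> card E"
  using int_H tgt_nonint by (cases "intv (tgt e)") auto

lemma Up1: "S 1 = Up 1"
proof -
  have "real (Hn (tgt e)) < real (card E) + 1" if "e \<in> E" for e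
    using Ht_le[OF that] by linarith
  then show ?thesis unfolding Up_def S_mem[abs_def] using ys0 by (auto simp: S_mem)
qed

lemma Ustep: assumes "1 \<le> j" "j < n" shows "Up (Suc j) = Up j \<union> S (Suc j)"
proof
  show "Up (Suc j) \<subseteq> Up j \<union> S (Suc j)"
  proof
    fix e assume e: "e \<in> Up (Suc j)"
    then have eE: "e \<in> E" and h: "ys (Suc j) < real (Hn (src e))" unfolding Up_def by auto
    show "e \<in> Up j \<union> S (Suc j)"
    proof (cases "ys j < real (Hn (src e))")
      case True then show ?thesis using eE unfolding Up_def by auto
    next
      case False
      moreover have "real (Hn (src e)) \<noteq> ys j" using ysV[of j "src e"] assms srcV eE by auto
      ultimately have "real (Hn (src e)) < ys j" by auto
      moreover have "real (Hn (tgt e)) < real (Hn (src e))" using H_edge eE by auto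
      ultimately show ?thesis using eE h S_mem by auto
    qed
  qed
  show "Up j \<union> S (Suc j) \<subseteq> Up (Suc j)"
    using ysS[OF assms(2)] unfolding Up_def by (auto simp: S_mem)
qed

lemma Un: "Up n = E"
proof -
  have "0 < real (Hn (src e))" if "e \<in> E" for e using H_edge[OF that] by auto
  then show ?thesis unfolding Up_def using ysn by auto
qed

lemma cut_mem: "e \<in> cut_edges E src tgt ps ys j \<longleftrightarrow> e \<in> E \<and> real (Hn (tgt e)) < ys j \<and> ys j < real (Hn (src e))"
  unfolding cut_edges_def snd_ps by auto

lemma Up_fin: "finite (Up j)" "Up j \<subseteq> E" using finE unfolding Up_def by auto

lemma ex_max_rk: assumes "finite A" "A \<noteq> {}" obtains z where "z \<in> A" "\<And>a. a \<in> A \<Longrightarrow> rk a \<le> rk z"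
proof -
  have "Max (rk ` A) \<in> rk ` A" using assms by (intro Max_in) auto
  then obtain z where "z \<in> A" "rk z = Max (rk ` A)" by auto
  then show ?thesis using that assms by auto
qed

lemma ex_min_rk: assumes "finite A" "A \<noteq> {}" obtains z where "z \<in> A" "\<And>a. a \<in> A \<Longrightarrow> rk z \<le> rk a"
proof -
  have "Min (rk ` A) \<in> rk ` A" using assms by (intro Min_in) auto
  then obtain z where "z \<in> A" "rk z = Min (rk ` A)" by auto
  then show ?thesis using that assms by auto
qed

lemma le_neq_lt: "a \<in> E \<Longrightarrow> b \<in> E \<Longrightarrow> rk a \<le> rk b \<Longrightarrow> a \<noteq> b \<Longrightarrow> lt a b"
  using rk_inj rk_less by (metis le_neq_implies_less)

lemma comp_step:
  assumes j1: "1 \<le> j" and jn: "j < n"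
  shows "compose_order (cut_edges E src tgt ps ys j) (sl (Up j)) (sl (S (Suc j))) = sl (Up j \<union> S (Suc j))"
proof -
  define A where "A = Up j"
  define B where "B = S (Suc j)"
  define Z where "Z = cut_edges E src tgt ps ys j"
  have y10: "ys (Suc j) < ys j" using ysS jn by auto
  have y0pos: "0 < ys j" using ys_mono[of j n] jn ysn by auto
  have y0top: "ys j < real (card E) + 1" using ys_mono[of 0 j] j1 jn ys0 by auto
  have nov: "real (Hn v) \<noteq> ys j" if "v \<in> V" for v using ysV[of j v] j1 jn that by auto
  have Amem: "e \<in> A \<longleftrightarrow> e \<in> E \<and> ys j < real (Hn (src e))" for e unfolding A_def Up_def by auto
  have Bmem: "e \<in> B \<longleftrightarrow> e \<in> E \<and> real (Hn (tgt e)) < ys j \<and> ys (Suc j) < real (Hn (src e))" for e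
    unfolding B_def S_mem by simp
  have Zmem: "e \<in> Z \<longleftrightarrow> e \<in> E \<and> real (Hn (tgt e)) < ys j \<and> ys j < real (Hn (src e))" for e
    unfolding Z_def cut_mem by simp
  have fA: "finite A" "A \<subseteq> E" using Up_fin A_def by auto
  have fB: "finite B" "B \<subseteq> E" using S_fin B_def by auto
  have AB: "e \<in> A \<inter> B \<longleftrightarrow> e \<in> E \<and> real (Hn (tgt e)) < ys j \<and> ys j < real (Hn (src e))" for e
    using Amem Bmem y10 by auto
  have AmB: "real (Hn (tgt e)) > ys j" if "e \<in> A - B" for e
  proof -
    have "e \<in> E" "ys j < real (Hn (src e))" "\<not> real (Hn (tgt e)) < ys j" using that Amem Bmem y10 by auto
    moreover have "real (Hn (tgt e)) \<noteq> ys j" using nov tgtV \<open>e \<in> E\<close> by auto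
    ultimately show ?thesis by auto
  qed
  have BmA: "real (Hn (src e)) < ys j" "ys (Suc j) < real (Hn (src e))" "e \<in> E" if "e \<in> B - A" for e
  proof -
    have "e \<in> E" "\<not> ys j < real (Hn (src e))" "ys (Suc j) < real (Hn (src e))" using that Amem Bmem by auto
    moreover have "real (Hn (src e)) \<noteq> ys j" using nov srcV \<open>e \<in> E\<close> by auto
    ultimately show "real (Hn (src e)) < ys j" "ys (Suc j) < real (Hn (src e))" "e \<in> E" by auto
  qed
  have srcB_int: "intv (src e)" if "e \<in> B - A" for e
  proof (rule ccontr)
    assume "\<not> intv (src e)"
    then have "Hn (src e) = card E + 1" using src_nonint BmA(3)[OF that] by auto
    then show False using BmA(1)[OF that] y0top by auto
  qed
  have R1: "\<forall>a\<in>A - B. \<exists>z\<in>A \<inter> B. lt a z"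
  proof
    fix a assume a: "a \<in> A - B"
    obtain z where z: "z \<in> A" "\<And>x. x \<in> A \<Longrightarrow> rk x \<le> rk z" using ex_max_rk[OF fA(1)] a by blast
    have oB: "z \<in> B"
    proof (rule ccontr)
      assume "z \<notin> B"
      then have gt: "real (Hn (tgt z)) > ys j" using AmB z by auto
      have oE: "z \<in> E" using z fA by auto
      have "intv (tgt z)"
      proof (rule ccontr)
        assume "\<not> intv (tgt z)" then have "Hn (tgt z) = 0" using tgt_nonint oE by auto
        then show False using gt y0pos by auto
      qed
      then obtain c where c: "c \<in> Ov (tgt z)" using intv_iff by auto
      have cE: "c \<in> E" "src c = tgt z" using c O_mem by auto
      have "z \<noteq> c" using noloop oE cE by metis
      then have "reach z c" using reach_adj oE cE by auto
      then have "rk z < rk c" using P1 rk_mono by blast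
      moreover have "c \<in> A" using Amem cE gt by auto
      ultimately show False using z(2) by fastforce
    qed
    have "a \<noteq> z" using a oB by auto
    then have "lt a z" using le_neq_lt a z fA by auto
    then show "\<exists>z\<in>A \<inter> B. lt a z" using z oB by auto
  qed
  have R2: "\<forall>b\<in>B - A. \<exists>z\<in>A \<inter> B. lt z b"
  proof
    fix b assume b: "b \<in> B - A"
    obtain z where z: "z \<in> B" "\<And>x. x \<in> B \<Longrightarrow> rk z \<le> rk x" using ex_min_rk[OF fB(1)] b by blast
    have oA: "z \<in> A"
    proof (rule ccontr)
      assume "z \<notin> A"
      then have oBA: "z \<in> B - A" using z by auto
      note h = BmA[OF oBA]
      obtain a where a: "a \<in> Iv (src z)" using srcB_int[OF oBA] intv_iff by auto
      have aE: "a \<in> E" "tgt a = src z" using a I_mem by auto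
      have "a \<noteq> z" using noloop aE h(3) by metis
      then have "reach a z" using reach_adj aE h(3) by auto
      then have "rk a < rk z" using P1 rk_mono by blast
      moreover have "a \<in> B" using Bmem aE h H_edge_r[OF aE(1)] by auto
      ultimately show False using z(2) by fastforce
    qed
    have "b \<noteq> z" using b oA by auto
    then have "lt z b" using le_neq_lt b z fB by auto
    then show "\<exists>z\<in>A \<inter> B. lt z b" using z oA by auto
  qed
  have R3: "\<forall>q\<in>A - B. \<forall>p\<in>B - A. lt q p \<longrightarrow> (\<exists>z\<in>A \<inter> B. lt q z \<and> lt z p)"
  proof (intro ballI impI)
    fix q p assume q: "q \<in> A - B" and p: "p \<in> B - A" and qp: "lt q p"
    define u where "u = src p"
    have ui: "intv u" using srcB_int p u_def by auto
    note hp = BmA[OF p]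
    have qE: "q \<in> E" and hq: "real (Hn (tgt q)) > ys j" using q fA AmB by auto
    have IuAB: "a \<in> A \<inter> B" if a: "a \<in> Iv u" for a
    proof -
      have aE: "a \<in> E" "tgt a = u" using a I_mem by auto
      have ha: "real (Hn (tgt a)) < real (Hn (src a))" using H_edge aE by auto
      have "ys j < real (Hn (src a))"
      proof (rule ccontr)
        assume "\<not> ys j < real (Hn (src a))"
        moreover have "real (Hn (src a)) \<noteq> ys j" using nov srcV aE by auto
        ultimately have lt0: "real (Hn (src a)) < ys j" by auto
        show False
        proof (cases "intv (src a)")
          case True
          have jj: "Suc j \<in> {1..n}" using jn by auto
          have "SV (Suc j) (src a)" "SV (Suc j) u"
            using True ui lt0 ha aE hp u_def SV_iff by auto
          then have "src a = u" using SV_unique[OF jj] by auto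
          then show False using noloop[of a] aE by auto
        next
          case False
          then have "Hn (src a) = card E + 1" using src_nonint aE by auto
          then show False using lt0 y0top by auto
        qed
      qed
      then show ?thesis using AB aE hp u_def by auto
    qed
    have "\<exists>z\<in>Iv u. lt q z"
    proof (rule ccontr)
      assume nq: "\<not> (\<exists>z\<in>Iv u. lt q z)"
      obtain o0 where o0: "o0 \<in> Iv u" using ui intv_iff by auto
      have o0E: "o0 \<in> E" "tgt o0 = u" using o0 I_mem by auto
      have "o0 \<noteq> q" using IuAB[OF o0] q by auto
      then have "lt o0 q" using nq o0 prec_total[of o0 q] o0E qE by auto
      moreover have "o0 \<noteq> p" using o0E hp u_def noloop[of p] by auto
      then have "reach o0 p" using reach_adj[of o0 p] o0E hp u_def by auto
      ultimately have "reach o0 q \<or> reach q p" using P2 qp by blast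
      then show False
      proof
        assume "reach o0 q"
        then have "Hn (src q) \<le> Hn (tgt o0)" by (rule HL)
        moreover have "real (Hn (tgt q)) < real (Hn (src q))" using H_edge qE by auto
        ultimately show False using hq hp o0E u_def by auto
      next
        assume "reach q p"
        then have "tgt q = src p \<or> (\<exists>x. x \<in> E \<and> tgt x = src p \<and> reach q x)" by (rule reach_into)
        then show False
        proof
          assume "tgt q = src p"
          then have "q \<in> Iv u" using qE I_mem u_def by auto
          then show False using IuAB q by auto
        next
          assume "\<exists>x. x \<in> E \<and> tgt x = src p \<and> reach q x"
          then obtain x where "x \<in> Iv u" "reach q x" using I_mem u_def by auto
          then show False using nq P1 by auto
        qed
      qed
    qed
    then obtain z where z: "z \<in> Iv u" "lt q z" by auto
    have "z \<in> E" "tgt z = src p" using z I_mem u_def by auto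
    moreover have "z \<noteq> p" using noloop calculation by metis
    ultimately have "reach z p" using reach_adj hp by auto
    then have "lt z p" using P1 by auto
    then show "\<exists>z\<in>A \<inter> B. lt q z \<and> lt z p" using z IuAB by auto
  qed
  have "compose_order Z (sl A) (sl B) = sl (A \<union> B)"
  proof (rule COMP[OF fA(1) fB(1) fA(2) fB(2) _ _ _ R1 R2 R3])
    show "A \<inter> Z \<subseteq> B" using Amem Bmem Zmem y10 by auto
    show "B \<inter> Z \<subseteq> A" using Amem Bmem Zmem by auto
    show "A \<inter> B \<subseteq> Z" using AB Zmem by auto
  qed
  then show ?thesis unfolding A_def B_def Z_def .
qed

lemma stack_eq: "Suc k \<le> n \<Longrightarrow>
  stack_order (canon_list V E src tgt ps gm ys) (cut_edges E src tgt ps ys) (Suc k) = sl (Up (Suc k))"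
proof (induction k)
  case 0
  then show ?case using canon_list_eq[of 1] Up1 n1 by simp
next
  case (Suc k)
  have j: "Suc (Suc k) \<in> {1..n}" using Suc.prems by auto
  have "stack_order (canon_list V E src tgt ps gm ys) (cut_edges E src tgt ps ys) (Suc (Suc k))
      = compose_order (cut_edges E src tgt ps ys (Suc k)) (sl (Up (Suc k))) (sl (S (Suc (Suc k))))"
    using Suc canon_list_eq[OF j] by simp
  also have "\<dots> = sl (Up (Suc k) \<union> S (Suc (Suc k)))"
    using comp_step[of "Suc k"] Suc.prems by auto
  also have "\<dots> = sl (Up (Suc (Suc k)))" using Ustep[of "Suc k"] Suc.prems by auto
  finally show ?case .
qed

lemma emb_order: "embedding_order V E src tgt ps gm n ys = prec"
proof -
  obtain k where k: "n = Suc k" using n1 by (cases n) auto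
  have "embedding_order V E src tgt ps gm n ys = list_order (sl (Up n))"
    unfolding embedding_order_def using stack_eq[of k] k by simp
  then show ?thesis using Un list_order_sl by simp
qed

end

context PG begin

definition ysd :: "nat \<Rightarrow> real" where
  "ysd j = (if j = 0 then real (card E) + 1 else if card E + 2 \<le> j then 0 else real (card E) + 3/2 - real j)"

lemma half_ne: "real k \<noteq> real m + 3/2 - real j"
proof
  assume "real k = real m + 3/2 - real j"
  then have "real (2 * k + 2 * j) = real (2 * m + 3)" by simp
  then have "2 * k + 2 * j = 2 * m + 3" by (simp only: of_nat_eq_iff)
  then show False by presburger
qed

lemma exists_cut: "valid_cut V E src tgt ps 0 (real (card E) + 1) (card E + 2) ysd"
  unfolding valid_cut_def snd_ps
proof (intro conjI allI impI ballI)
  show "1 \<le> card E + 2" by simp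
  show "ysd 0 = real (card E) + 1" unfolding ysd_def by simp
  show "ysd (card E + 2) = 0" unfolding ysd_def by simp
  fix j
  show "j < card E + 2 \<Longrightarrow> ysd (Suc j) < ysd j"
  proof -
    assume j: "j < card E + 2"
    show ?thesis
    proof (cases "j = 0")
      case True then show ?thesis unfolding ysd_def by simp
    next
      case False
      then show ?thesis using j unfolding ysd_def by (cases "Suc j = card E + 2") auto
    qed
  qed
next
  fix j v assume j: "0 < j \<and> j < card E + 2" and v: "v \<in> V"
  then show "real (Hn v) \<noteq> ysd j" unfolding ysd_def using half_ne by auto
next
  fix j v w assume j: "j \<in> {1..card E + 2}"
    and vw: "intv v \<and> intv w \<and> ysd j < real (Hn v) \<and> real (Hn v) < ysd (j - 1) \<and>
         ysd j < real (Hn w) \<and> real (Hn w) < ysd (j - 1)"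
  have len: "ysd (j - 1) - ysd j \<le> 1"
  proof (cases "j = 1")
    case True then show ?thesis unfolding ysd_def by simp
  next
    case False
    show ?thesis
    proof (cases "j = card E + 2")
      case True then show ?thesis using False unfolding ysd_def by (simp add: of_nat_diff)
    next
      case False2: False
      then show ?thesis using False j unfolding ysd_def by (simp add: of_nat_diff)
    qed
  qed
  have "\<bar>real (Hn v) - real (Hn w)\<bar> < 1" using vw len by (auto simp: abs_less_iff)
  then have "Hn v = Hn w" using nat_sep by force
  then show "v = w" using Hn_inj vw by auto
qed

end

theorem proposition1p2:
  fixes V :: "'v set" and E :: "'e set" and src tgt :: "'e \<Rightarrow> 'v"
    and prec :: "('e \<times> 'e) set"
  assumes "progressive_graph V E src tgt"
    and "planar_order E src tgt prec"
  shows "\<exists>(pos :: 'v \<Rightarrow> point) (gam :: 'e \<Rightarrow> real \<Rightarrow> point) a b c d.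
           upward_BP_embedding V E src tgt pos gam a b c d \<and>
           (\<exists>n ys. valid_cut V E src tgt pos c d n ys) \<and>
           (\<forall>n ys. valid_cut V E src tgt pos c d n ys \<longrightarrow>
                   prec = embedding_order V E src tgt pos gam n ys)"
proof -
  interpret PG V E src tgt prec using assms by (unfold_locales)
  have "upward_BP_embedding V E src tgt ps gm (-1) (real (card E)) 0 (real (card E) + 1) \<and>
           (\<exists>n ys. valid_cut V E src tgt ps 0 (real (card E) + 1) n ys) \<and>
           (\<forall>n ys. valid_cut V E src tgt ps 0 (real (card E) + 1) n ys \<longrightarrow>
                   prec = embedding_order V E src tgt ps gm n ys)"
  proof (intro conjI allI impI)
    show "upward_BP_embedding V E src tgt ps gm (-1) (real (card E)) 0 (real (card E) + 1)" by (rule upward)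
    show "\<exists>n ys. valid_cut V E src tgt ps 0 (real (card E) + 1) n ys" using exists_cut by blast
    fix n ys assume "valid_cut V E src tgt ps 0 (real (card E) + 1) n ys"
    then interpret CUT V E src tgt prec n ys by unfold_locales
    show "prec = embedding_order V E src tgt ps gm n ys" using emb_order by simp
  qed
  then show ?thesis by blast
qed


end
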